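(* For every claw-free cubic graph $G$, $\nu_2(G) \geq \frac{5}{6}\cdot |V(G)|$.
   Context: Graphs are finite, without loops, possibly with multiple edges; a graph is cubic if every vertex has degree $3$, and claw-free if it has no induced subgraph isomorphic to $K_{1,3}$. For $k\geq 1$, $\nu_k(G)$ is the maximum number of edges of a $k$-edge-colorable subgraph of $G$. *)

theory Defs
  imports Complex_Main
begin

text \<open>Parallel edges are distinct elements of E with the same endpoints.\<close>
definition multigraph :: "'v set \<Rightarrow> 'e set \<Rightarrow> ('e \<Rightarrow> 'v set) \<Rightarrow> bool" where
  "multigraph V E ends \<longleftrightarrow> finite V \<and> finite E \<and>
     (\<forall>e\<in>E. ends e \<subseteq> V \<and> card (ends e) = 2)"

definition degree :: "'e set \<Rightarrow> ('e \<Rightarrow> 'v set) \<Rightarrow> 'v \<Rightarrow> nat" where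
  "degree E ends v = card {e\<in>E. v \<in> ends e}"

definition cubic :: "'v set \<Rightarrow> 'e set \<Rightarrow> ('e \<Rightarrow> 'v set) \<Rightarrow> bool" where
  "cubic V E ends \<longleftrightarrow> (\<forall>v\<in>V. degree E ends v = 3)"

definition adjacent :: "'e set \<Rightarrow> ('e \<Rightarrow> 'v set) \<Rightarrow> 'v \<Rightarrow> 'v \<Rightarrow> bool" where
  "adjacent E ends x y \<longleftrightarrow> (\<exists>e\<in>E. ends e = {x, y})"

definition claw_free :: "'v set \<Rightarrow> 'e set \<Rightarrow> ('e \<Rightarrow> 'v set) \<Rightarrow> bool" where
  "claw_free V E ends \<longleftrightarrow> \<not> (\<exists>v a b c. v \<in> V \<and> a \<in> V \<and> b \<in> V \<and> c \<in> V \<and>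
      distinct [v, a, b, c] \<and>
      adjacent E ends v a \<and> adjacent E ends v b \<and> adjacent E ends v c \<and>
      \<not> adjacent E ends a b \<and> \<not> adjacent E ends a c \<and> \<not> adjacent E ends b c)"

definition k_edge_colorable :: "nat \<Rightarrow> ('e \<Rightarrow> 'v set) \<Rightarrow> 'e set \<Rightarrow> bool" where
  "k_edge_colorable k ends F \<longleftrightarrow> (\<exists>col :: 'e \<Rightarrow> nat.
     (\<forall>e\<in>F. col e < k) \<and>
     (\<forall>e1\<in>F. \<forall>e2\<in>F. e1 \<noteq> e2 \<and> ends e1 \<inter> ends e2 \<noteq> {} \<longrightarrow> col e1 \<noteq> col e2))"

definition nu :: "nat \<Rightarrow> 'e set \<Rightarrow> ('e \<Rightarrow> 'v set) \<Rightarrow> nat" where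
  "nu k E ends = Max {card F | F. F \<subseteq> E \<and> k_edge_colorable k ends F}"

end

theory Submission
  imports Defs
begin


definition inc :: "'e set \<Rightarrow> ('e \<Rightarrow> 'v set) \<Rightarrow> 'v \<Rightarrow> 'e set" where
  "inc E ends v = {e\<in>E. v \<in> ends e}"

definition claw_at :: "'v set \<Rightarrow> 'e set \<Rightarrow> ('e \<Rightarrow> 'v set) \<Rightarrow> 'v \<Rightarrow> bool" where
  "claw_at V E ends v \<longleftrightarrow> (\<exists>a b c. v \<in> V \<and> a \<in> V \<and> b \<in> V \<and> c \<in> V \<and>
      distinct [v, a, b, c] \<and>
      adjacent E ends v a \<and> adjacent E ends v b \<and> adjacent E ends v c \<and>
      \<not> adjacent E ends a b \<and> \<not> adjacent E ends a c \<and> \<not> adjacent E ends b c)"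

definition ncl :: "'v set \<Rightarrow> 'e set \<Rightarrow> ('e \<Rightarrow> 'v set) \<Rightarrow> nat" where
  "ncl V E ends = card {v\<in>V. claw_at V E ends v}"

definition proper :: "('e \<Rightarrow> 'v set) \<Rightarrow> 'e set \<Rightarrow> ('e \<Rightarrow> nat) \<Rightarrow> bool" where
  "proper ends F col \<longleftrightarrow> (\<forall>e\<in>F. col e < 2) \<and>
     (\<forall>e1\<in>F. \<forall>e2\<in>F. e1 \<noteq> e2 \<and> ends e1 \<inter> ends e2 \<noteq> {} \<longrightarrow> col e1 \<noteq> col e2)"

definition witness :: "'e set \<Rightarrow> ('e \<Rightarrow> 'v set) \<Rightarrow> 'v \<Rightarrow> bool" where
  "witness E ends y \<longleftrightarrow> (\<exists>e1 e2 r s. e1 \<in> E \<and> e2 \<in> E \<and> e1 \<noteq> e2 \<and> ends e1 = {y, r} \<and>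
      ends e2 = {y, s} \<and> (r = s \<or> adjacent E ends r s))"

lemma col2_iff: "k_edge_colorable 2 ends F \<longleftrightarrow> (\<exists>col. proper ends F col)"
  unfolding k_edge_colorable_def proper_def by blast

lemma claw_free_iff: "claw_free V E ends \<longleftrightarrow> (\<forall>v. \<not> claw_at V E ends v)"
  unfolding claw_free_def claw_at_def by blast

lemma claw_free_ncl: "claw_free V E ends \<Longrightarrow> ncl V E ends = 0"
  unfolding ncl_def claw_free_iff by simp

lemma nu_set_finite:
  assumes "finite E"
  shows "finite {card F | F. F \<subseteq> E \<and> k_edge_colorable k ends F}"
proof -
  have "{card F | F. F \<subseteq> E \<and> k_edge_colorable k ends F} \<subseteq> {..card E}"
  proof
    fix x assume "x \<in> {card F | F. F \<subseteq> E \<and> k_edge_colorable k ends F}"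
    then obtain F where "x = card F" "F \<subseteq> E" by blast
    thus "x \<in> {..card E}" using card_mono[OF assms] by simp
  qed
  thus ?thesis by (rule finite_subset) simp
qed

lemma empty_col: "k_edge_colorable k ends {}"
  unfolding k_edge_colorable_def by simp

lemma nu_ge:
  assumes "finite E" "F \<subseteq> E" "k_edge_colorable k ends F"
  shows "card F \<le> nu k E ends"
  unfolding nu_def
proof (rule Max_ge[OF nu_set_finite[OF assms(1)]])
  show "card F \<in> {card F | F. F \<subseteq> E \<and> k_edge_colorable k ends F}" using assms by blast
qed

lemma nu_obtain:
  assumes "finite E"
  obtains F where "F \<subseteq> E" "k_edge_colorable k ends F" "card F = nu k E ends"
proof -
  have "card ({} \<inter> E) \<in> {card F | F. F \<subseteq> E \<and> k_edge_colorable k ends F}"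
    by (intro CollectI exI[of _ "{} \<inter> E"]) (simp add: empty_col)
  hence ne: "{card F | F. F \<subseteq> E \<and> k_edge_colorable k ends F} \<noteq> {}" by blast
  have "nu k E ends \<in> {card F | F. F \<subseteq> E \<and> k_edge_colorable k ends F}"
    unfolding nu_def using Max_in[OF nu_set_finite[OF assms] ne] .
  then obtain F where "F \<subseteq> E" "k_edge_colorable k ends F" "card F = nu k E ends" by auto
  thus ?thesis using that by blast
qed

lemma mg_finE: "multigraph V E ends \<Longrightarrow> finite E" unfolding multigraph_def by simp
lemma mg_finV: "multigraph V E ends \<Longrightarrow> finite V" unfolding multigraph_def by simp

lemma mg_ends:
  assumes "multigraph V E ends" "e \<in> E"
  obtains x y where "x \<noteq> y" "ends e = {x, y}" "x \<in> V" "y \<in> V"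
proof -
  have "ends e \<subseteq> V" "card (ends e) = 2" using assms unfolding multigraph_def by auto
  then obtain x y where "x \<noteq> y" "ends e = {x,y}" by (auto simp: card_2_iff)
  thus ?thesis using that \<open>ends e \<subseteq> V\<close> by auto
qed

lemma mg_other:
  assumes "multigraph V E ends" "e \<in> E" "v \<in> ends e"
  obtains w where "w \<noteq> v" "ends e = {v, w}" "w \<in> V" "v \<in> V"
proof -
  obtain x y where "x \<noteq> y" "ends e = {x, y}" "x \<in> V" "y \<in> V" by (rule mg_ends[OF assms(1,2)])
  show ?thesis
  proof (cases "v = x")
    case True show ?thesis by (rule that[of y]) (use True \<open>x \<noteq> y\<close> \<open>ends e = {x,y}\<close> \<open>y \<in> V\<close> \<open>x \<in> V\<close> in auto)
  next
    case False hence "v = y" using assms(3) \<open>ends e = {x,y}\<close> by blast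
    hence "ends e = {v, x}" using \<open>ends e = {x,y}\<close> by blast
    show ?thesis by (rule that[of x]) (use \<open>ends e = {v, x}\<close> \<open>x \<noteq> y\<close> \<open>v = y\<close> \<open>y \<in> V\<close> \<open>x \<in> V\<close> in auto)
  qed
qed

lemma cubic_inc:
  assumes "multigraph V E ends" "cubic V E ends" "v \<in> V"
  obtains e1 e2 e3 where "distinct [e1,e2,e3]" "inc E ends v = {e1,e2,e3}"
proof -
  have "card (inc E ends v) = 3" using assms unfolding cubic_def degree_def inc_def by auto
  thus ?thesis using that by (auto simp: card_3_iff)
qed

lemma inc_finite: "multigraph V E ends \<Longrightarrow> finite (inc E ends v)"
  unfolding inc_def multigraph_def by auto

lemma cubic_inc_eq:
  assumes "multigraph V E ends" "cubic V E ends" "v \<in> V"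
    "distinct [e1,e2,e3]" "{e1,e2,e3} \<subseteq> inc E ends v"
  shows "inc E ends v = {e1,e2,e3}"
proof -
  have "card (inc E ends v) = 3" using assms unfolding cubic_def degree_def inc_def by auto
  moreover have "card {e1,e2,e3} = 3" using assms(4) by simp
  ultimately show ?thesis using card_subset_eq[OF inc_finite[OF assms(1)] assms(5)]
    by simp
qed

lemma adjacent_sym: "adjacent E ends x y = adjacent E ends y x"
  unfolding adjacent_def by (metis insert_commute)


lemma mg_ne:
  assumes "multigraph V E ends" "e \<in> E" "ends e = {y, r}"
  shows "r \<noteq> y"
proof
  assume "r = y"
  hence "card (ends e) = 1" using assms(3) by simp
  thus False using assms(1,2) unfolding multigraph_def by auto
qed

lemma mg_inV:
  assumes "multigraph V E ends" "e \<in> E" "x \<in> ends e"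
  shows "x \<in> V"
  using assms unfolding multigraph_def by auto

lemma witnessE:
  assumes w: "witness E ends y"
  obtains e1 e2 r s where "e1 \<in> E" "ends e1 = {y,r}" "e2 \<in> E" "ends e2 = {y,s}" "e1 \<noteq> e2"
     "r = s \<or> adjacent E ends r s"
  using w unfolding witness_def by (elim exE conjE) (rule that)

lemma witnessI:
  assumes "e1 \<in> E" "ends e1 = {y,r}" "e2 \<in> E" "ends e2 = {y,s}" "e1 \<noteq> e2"
     "r = s \<or> adjacent E ends r s"
  shows "witness E ends y"
  unfolding witness_def using assms by (intro exI[of _ e1] exI[of _ e2] exI[of _ r] exI[of _ s]) simp

lemma clawE:
  assumes "claw_at V E ends y"
  obtains a b c where "y \<in> V" "a \<in> V" "b \<in> V" "c \<in> V" "distinct [y, a, b, c]"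
    "adjacent E ends y a" "adjacent E ends y b" "adjacent E ends y c"
    "\<not> adjacent E ends a b" "\<not> adjacent E ends a c" "\<not> adjacent E ends b c"
  using assms unfolding claw_at_def by (elim exE conjE) (rule that)

lemma adjE:
  assumes "adjacent E ends x y"
  obtains e where "e \<in> E" "ends e = {x,y}"
  using assms unfolding adjacent_def by (elim bexE) (rule that)

lemma adjI: "e \<in> E \<Longrightarrow> ends e = {x,y} \<Longrightarrow> adjacent E ends x y"
  unfolding adjacent_def by (rule bexI)

lemma witness_noclaw:
  assumes mg: "multigraph V E ends" and cu: "cubic V E ends" and w: "witness E ends y"
  shows "\<not> claw_at V E ends y"
proof
  assume "claw_at V E ends y"
  then obtain a b c where yV: "y \<in> V" and d: "distinct [y, a, b, c]"
    and A: "adjacent E ends y a" "adjacent E ends y b" "adjacent E ends y c"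
    and nab: "\<not> adjacent E ends a b" and nac: "\<not> adjacent E ends a c"
    and nbc: "\<not> adjacent E ends b c"
    by (rule clawE)
  obtain ea where ea: "ea \<in> E" "ends ea = {y,a}" using A(1) by (rule adjE)
  obtain eb where eb: "eb \<in> E" "ends eb = {y,b}" using A(2) by (rule adjE)
  obtain ec where ec: "ec \<in> E" "ends ec = {y,c}" using A(3) by (rule adjE)
  have dst: "distinct [ea,eb,ec]" using ea eb ec d by (auto simp: doubleton_eq_iff)
  have I: "inc E ends y = {ea,eb,ec}"
  proof (rule cubic_inc_eq[OF mg cu yV dst])
    show "{ea, eb, ec} \<subseteq> inc E ends y" using ea eb ec unfolding inc_def by simp
  qed
  obtain e1 e2 r s where e1: "e1 \<in> E" "ends e1 = {y,r}" and e2: "e2 \<in> E" "ends e2 = {y,s}"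
    and ne: "e1 \<noteq> e2" and rs: "r = s \<or> adjacent E ends r s"
    using w by (rule witnessE)
  have "e1 \<in> inc E ends y" "e2 \<in> inc E ends y" using e1 e2 by (auto simp: inc_def)
  hence m1: "e1 \<in> {ea,eb,ec}" and m2: "e2 \<in> {ea,eb,ec}" using I by auto
  have ry: "r \<noteq> y" using mg_ne[OF mg e1] .
  have sy: "s \<noteq> y" using mg_ne[OF mg e2] .
  have r3: "(e1 = ea \<and> r = a) \<or> (e1 = eb \<and> r = b) \<or> (e1 = ec \<and> r = c)"
    using m1 e1 ea eb ec ry by (auto simp: doubleton_eq_iff)
  have s3: "(e2 = ea \<and> s = a) \<or> (e2 = eb \<and> s = b) \<or> (e2 = ec \<and> s = c)"
    using m2 e2 ea eb ec sy by (auto simp: doubleton_eq_iff)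
  show False using r3 s3 rs ne d nab nac nbc adjacent_sym by (metis distinct_length_2_or_more)
qed

lemma noclaw_witness:
  assumes mg: "multigraph V E ends" and cu: "cubic V E ends" and yV: "y \<in> V"
    and nc: "\<not> claw_at V E ends y"
  shows "witness E ends y"
proof (rule ccontr)
  assume nw: "\<not> witness E ends y"
  obtain e1 e2 e3 where d: "distinct [e1,e2,e3]" and I: "inc E ends y = {e1,e2,e3}"
    using cubic_inc[OF mg cu yV] by blast
  have h: "e1 \<in> E" "y \<in> ends e1" "e2 \<in> E" "y \<in> ends e2" "e3 \<in> E" "y \<in> ends e3"
    using I by (auto simp: inc_def)
  obtain r1 where r1: "r1 \<noteq> y" "ends e1 = {y,r1}" "r1 \<in> V" using mg_other[OF mg h(1,2)] by metis
  obtain r2 where r2: "r2 \<noteq> y" "ends e2 = {y,r2}" "r2 \<in> V" using mg_other[OF mg h(3,4)] by metis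
  obtain r3 where r3: "r3 \<noteq> y" "ends e3 = {y,r3}" "r3 \<in> V" using mg_other[OF mg h(5,6)] by metis
  have W: "\<And>f1 f2 r s. f1 \<in> E \<Longrightarrow> f2 \<in> E \<Longrightarrow> f1 \<noteq> f2 \<Longrightarrow> ends f1 = {y,r} \<Longrightarrow> ends f2 = {y,s}
     \<Longrightarrow> r \<noteq> s \<and> \<not> adjacent E ends r s"
    using nw witnessI by meson
  have E: "e1 \<in> E" "e2 \<in> E" "e3 \<in> E" using I by (auto simp: inc_def)
  have x12: "r1 \<noteq> r2 \<and> \<not> adjacent E ends r1 r2" using W[OF E(1) E(2) _ r1(2) r2(2)] d by simp
  have x13: "r1 \<noteq> r3 \<and> \<not> adjacent E ends r1 r3" using W[OF E(1) E(3) _ r1(2) r3(2)] d by simp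
  have x23: "r2 \<noteq> r3 \<and> \<not> adjacent E ends r2 r3" using W[OF E(2) E(3) _ r2(2) r3(2)] d by simp
  have "adjacent E ends y r1" "adjacent E ends y r2" "adjacent E ends y r3"
    using adjI[of e1 E ends y r1] adjI[of e2 E ends y r2] adjI[of e3 E ends y r3] E r1 r2 r3 by auto
  hence "claw_at V E ends y" unfolding claw_at_def
    using yV r1 r2 r3 x12 x13 x23 by (intro exI[of _ r1] exI[of _ r2] exI[of _ r3]) simp
  thus False using nc by simp
qed

lemma witness_pi:
  assumes w: "witness E ends y"
    and phi: "\<And>e. e \<in> E \<Longrightarrow> y \<in> ends e \<Longrightarrow> \<phi> e \<in> E' \<and> ends' (\<phi> e) = \<pi> ` ends e"
    and inj: "\<And>e1 e2. e1 \<in> E \<Longrightarrow> y \<in> ends e1 \<Longrightarrow> e2 \<in> E \<Longrightarrow> y \<in> ends e2 \<Longrightarrow> \<phi> e1 = \<phi> e2 \<Longrightarrow> e1 = e2"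
    and py: "\<pi> y = y"
    and adj: "\<And>e r s. e \<in> E \<Longrightarrow> ends e = {r,s} \<Longrightarrow> \<pi> r = \<pi> s \<or> adjacent E' ends' (\<pi> r) (\<pi> s)"
  shows "witness E' ends' y"
proof -
  obtain e1 e2 r s where e1: "e1 \<in> E" "ends e1 = {y,r}" and e2: "e2 \<in> E" "ends e2 = {y,s}"
    and ne: "e1 \<noteq> e2" and rs: "r = s \<or> adjacent E ends r s"
    using w by (rule witnessE)
  have p1: "\<phi> e1 \<in> E'" "ends' (\<phi> e1) = {y, \<pi> r}" using phi[of e1] e1 py by auto
  have p2: "\<phi> e2 \<in> E'" "ends' (\<phi> e2) = {y, \<pi> s}" using phi[of e2] e2 py by auto
  have "\<phi> e1 \<noteq> \<phi> e2" using inj[of e1 e2] e1 e2 ne by auto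
  moreover have "\<pi> r = \<pi> s \<or> adjacent E' ends' (\<pi> r) (\<pi> s)"
  proof (cases "r = s")
    case False
    then obtain e where "e \<in> E" "ends e = {r,s}" using rs by (auto elim: adjE)
    thus ?thesis using adj by blast
  qed simp
  ultimately show ?thesis using witnessI[OF p1 p2] by blast
qed

lemma witness_avoid:
  assumes w: "witness E ends y" and yS: "y \<notin> S"
    and avoid: "\<And>e1 e2 r s. e1 \<in> E \<Longrightarrow> e2 \<in> E \<Longrightarrow> e1 \<noteq> e2 \<Longrightarrow> ends e1 = {y,r} \<Longrightarrow>
        ends e2 = {y,s} \<Longrightarrow> r = s \<or> adjacent E ends r s \<Longrightarrow> r \<notin> S \<and> s \<notin> S"
    and keep: "\<And>e. e \<in> E \<Longrightarrow> ends e \<inter> S = {} \<Longrightarrow> e \<in> E' \<and> ends' e = ends e"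
  shows "witness E' ends' y"
proof -
  obtain e1 e2 r s where e1: "e1 \<in> E" "ends e1 = {y,r}" and e2: "e2 \<in> E" "ends e2 = {y,s}"
    and ne: "e1 \<noteq> e2" and rs: "r = s \<or> adjacent E ends r s"
    using w by (rule witnessE)
  have RS: "r \<notin> S" "s \<notin> S" using avoid[OF e1(1) e2(1) ne e1(2) e2(2) rs] by auto
  have k1: "e1 \<in> E'" "ends' e1 = {y,r}" using keep[of e1] e1 yS RS by auto
  have k2: "e2 \<in> E'" "ends' e2 = {y,s}" using keep[of e2] e2 yS RS by auto
  have "r = s \<or> adjacent E' ends' r s"
  proof (cases "r = s")
    case False
    then obtain e where e: "e \<in> E" "ends e = {r,s}" using rs by (auto elim: adjE)
    have "e \<in> E'" "ends' e = {r,s}" using keep[of e] RS e by auto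
    thus ?thesis using adjI by metis
  qed simp
  thus ?thesis using witnessI[OF k1 k2 ne] by blast
qed

lemma card_claw_bound:
  assumes "A \<subseteq> (B - X) \<union> Z" "X \<subseteq> B" "finite B" "finite Z"
  shows "card A + card X \<le> card B + card Z"
proof -
  have fA: "finite A" using assms by (meson finite_Diff finite_UnI finite_subset)
  have "card A \<le> card ((B - X) \<union> Z)" using assms by (intro card_mono) auto
  also have "\<dots> \<le> card (B - X) + card Z" by (rule card_Un_le)
  also have "card (B - X) = card B - card X"
    using assms by (meson card_Diff_subset finite_subset)
  finally show ?thesis using card_mono[OF assms(3,2)] by linarith
qed

lemma nu_step:
  assumes fE: "finite E" and fE': "finite E'"
    and ext: "\<And>F' col'. F' \<subseteq> E' \<Longrightarrow> proper ends' F' col' \<Longrightarrow>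
        \<exists>F col. F \<subseteq> E \<and> proper ends F col \<and> card F' + g \<le> card F"
  shows "nu 2 E' ends' + g \<le> nu 2 E ends"
proof -
  obtain F' where F': "F' \<subseteq> E'" "k_edge_colorable 2 ends' F'" "card F' = nu 2 E' ends'"
    by (rule nu_obtain[OF fE'])
  have "\<exists>col. proper ends' F' col" using F'(2) unfolding col2_iff .
  then obtain col' where c': "proper ends' F' col'" by (elim exE)
  have "\<exists>F col. F \<subseteq> E \<and> proper ends F col \<and> card F' + g \<le> card F" by (rule ext[OF F'(1) c'])
  then obtain F col where F: "F \<subseteq> E" "proper ends F col" "card F' + g \<le> card F"
    by (elim exE conjE)
  have "k_edge_colorable 2 ends F" unfolding col2_iff using F(2) by (rule exI[of _ col])
  hence "card F \<le> nu 2 E ends" by (rule nu_ge[OF fE F(1)])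
  thus ?thesis using F(3) F'(3) by simp
qed


lemma ncl_mono:
  assumes "V' \<subseteq> V" "finite V" "\<And>y. y \<in> V' \<Longrightarrow> claw_at V' E' ends' y \<Longrightarrow> claw_at V E ends y"
  shows "ncl V' E' ends' \<le> ncl V E ends"
  unfolding ncl_def using assms by (intro card_mono) auto

lemma comp_reduce:
  fixes V :: "'v set" and E :: "'e set"
  assumes mg: "multigraph V E ends" and cu: "cubic V E ends" and SV: "S \<subseteq> V"
    and closed: "\<And>e. e \<in> E \<Longrightarrow> ends e \<inter> S \<noteq> {} \<Longrightarrow> ends e \<subseteq> S"
    and NE: "N \<subseteq> E" and NS: "\<And>e. e \<in> N \<Longrightarrow> ends e \<subseteq> S" and pN: "proper ends N colN"
  shows "\<exists>(V'::'v set) (E'::'e set) ends'. multigraph V' E' ends' \<and> cubic V' E' ends' \<and> card V' + card S = card V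
     \<and> ncl V' E' ends' \<le> ncl V E ends \<and> nu 2 E' ends' + card N \<le> nu 2 E ends"
proof -
  define V' where "V' = V - S"
  define E' where "E' = {e\<in>E. ends e \<inter> S = {}}"
  have fV: "finite V" and fE: "finite E" using mg by (auto simp: multigraph_def)
  have mg': "multigraph V' E' ends"
    using mg unfolding multigraph_def V'_def E'_def by auto
  have incEq: "\<And>y. y \<in> V' \<Longrightarrow> {e\<in>E'. y \<in> ends e} = {e\<in>E. y \<in> ends e}"
    using closed unfolding V'_def E'_def by blast
  have cu': "cubic V' E' ends"
    using cu incEq unfolding cubic_def degree_def V'_def by auto
  have card: "card V' + card S = card V"
    unfolding V'_def using SV fV by (metis card_Diff_subset card_mono finite_subset le_add_diff_inverse2)
  have keep: "\<And>e. e \<in> E \<Longrightarrow> ends e \<inter> S = {} \<Longrightarrow> e \<in> E' \<and> ends e = ends e"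
    unfolding E'_def by simp
  have ncl: "ncl V' E' ends \<le> ncl V E ends"
  proof (rule ncl_mono)
    show "V' \<subseteq> V" unfolding V'_def by auto
    show "finite V" by (rule fV)
    fix y assume yV': "y \<in> V'" and c': "claw_at V' E' ends y"
    show "claw_at V E ends y"
    proof (rule ccontr)
      assume "\<not> claw_at V E ends y"
      hence w: "witness E ends y" using noclaw_witness[OF mg cu] yV' unfolding V'_def by auto
      have yS: "y \<notin> S" using yV' unfolding V'_def by auto
      have "witness E' ends y"
      proof (rule witness_avoid[OF w yS])
        fix e1 e2 r s assume "e1 \<in> E" "e2 \<in> E" "ends e1 = {y, r}" "ends e2 = {y, s}"
        thus "r \<notin> S \<and> s \<notin> S" using closed[of e1] closed[of e2] yS by auto
      next
        fix e assume "e \<in> E" "ends e \<inter> S = {}" thus "e \<in> E' \<and> ends e = ends e" by (rule keep)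
      qed
      thus False using witness_noclaw[OF mg' cu'] c' by blast
    qed
  qed
  have nu: "nu 2 E' ends + card N \<le> nu 2 E ends"
  proof (rule nu_step[OF fE])
    show "finite E'" using fE unfolding E'_def by auto
    fix F' col' assume F': "F' \<subseteq> E'" and p': "proper ends F' col'"
    define F where "F = F' \<union> N"
    define col where "col = (\<lambda>e. if e \<in> N then colN e else col' e)"
    have disj: "F' \<inter> N = {}"
    proof -
      { fix e assume "e \<in> F'" "e \<in> N"
        hence "ends e \<inter> S = {}" "ends e \<subseteq> S" using F' NS unfolding E'_def by auto
        hence "ends e = {}" by auto
        moreover have "card (ends e) = 2" using mg \<open>e \<in> N\<close> NE unfolding multigraph_def by auto
        ultimately have False by simp }
      thus ?thesis by blast
    qed
    have fF': "finite F'" using F' fE unfolding E'_def by (auto intro: finite_subset)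
    have fN: "finite N" using NE fE by (auto intro: finite_subset)
    have "card F = card F' + card N" unfolding F_def using card_Un_disjoint[OF fF' fN disj] .
    moreover have "F \<subseteq> E" unfolding F_def using F' NE unfolding E'_def by auto
    moreover have "proper ends F col"
      unfolding proper_def
    proof (intro conjI ballI impI)
      fix e assume "e \<in> F" thus "col e < 2" using p' pN unfolding F_def col_def proper_def by auto
    next
      fix e1 e2 assume e1: "e1 \<in> F" and e2: "e2 \<in> F" and h: "e1 \<noteq> e2 \<and> ends e1 \<inter> ends e2 \<noteq> {}"
      have A: "e \<in> F' \<Longrightarrow> ends e \<inter> S = {}" for e using F' unfolding E'_def by auto
      show "col e1 \<noteq> col e2"
      proof (cases "e1 \<in> N")
        case True
        show ?thesis
        proof (cases "e2 \<in> N")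
          case True thus ?thesis using \<open>e1 \<in> N\<close> pN h unfolding proper_def col_def by auto
        next
          case False hence "e2 \<in> F'" using e2 unfolding F_def by auto
          thus ?thesis using A[of e2] NS[of e1] True h by auto
        qed
      next
        case False hence e1F: "e1 \<in> F'" using e1 unfolding F_def by auto
        show ?thesis
        proof (cases "e2 \<in> N")
          case True
          thus ?thesis using A[of e1] NS[of e2] e1F h by auto
        next
          case False hence "e2 \<in> F'" using e2 unfolding F_def by auto
          thus ?thesis using e1F \<open>e1 \<notin> N\<close> False p' h unfolding proper_def col_def by auto
        qed
      qed
    qed
    ultimately show "\<exists>F col. F \<subseteq> E \<and> proper ends F col \<and> card F' + card N \<le> card F" by auto
  qed
  show ?thesis using mg' cu' card ncl nu by blast
qed


lemma proper_intro_local: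
  assumes "\<And>e. e \<in> F \<Longrightarrow> col e < 2"
    "\<And>x e1 e2. e1 \<in> F \<Longrightarrow> e2 \<in> F \<Longrightarrow> e1 \<noteq> e2 \<Longrightarrow> x \<in> ends e1 \<Longrightarrow> x \<in> ends e2 \<Longrightarrow> col e1 \<noteq> col e2"
  shows "proper ends F col"
  unfolding proper_def using assms by blast

lemma pat_transfer:
  assumes p': "proper ends' F' col'" and e: "e1 \<in> F" "e2 \<in> F" "x \<in> ends e1" "x \<in> ends e2"
    and phi: "\<And>e. e \<in> F \<Longrightarrow> x \<in> ends e \<Longrightarrow> \<phi> e \<in> F' \<and> x \<in> ends' (\<phi> e) \<and> col' (\<phi> e) = col e"
    and ne: "\<phi> e1 \<noteq> \<phi> e2"
  shows "col e1 \<noteq> col e2"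
proof -
  have a: "\<phi> e1 \<in> F'" "x \<in> ends' (\<phi> e1)" "col' (\<phi> e1) = col e1" using phi e by auto
  have b: "\<phi> e2 \<in> F'" "x \<in> ends' (\<phi> e2)" "col' (\<phi> e2) = col e2" using phi e by auto
  have "ends' (\<phi> e1) \<inter> ends' (\<phi> e2) \<noteq> {}" using a b by auto
  hence "col' (\<phi> e1) \<noteq> col' (\<phi> e2)" using p' a(1) b(1) ne unfolding proper_def by blast
  thus ?thesis using a b by simp
qed

lemma proper_lt2: "proper ends F col \<Longrightarrow> e \<in> F \<Longrightarrow> col e < 2"
  unfolding proper_def by blast

lemma proper_ne: "proper ends F col \<Longrightarrow> e1 \<in> F \<Longrightarrow> e2 \<in> F \<Longrightarrow> e1 \<noteq> e2 \<Longrightarrow> x \<in> ends e1 \<Longrightarrow> x \<in> ends e2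
   \<Longrightarrow> col e1 \<noteq> col e2"
  unfolding proper_def by blast

lemma in_inc: "e \<in> E \<Longrightarrow> x \<in> ends e \<Longrightarrow> inc E ends x = A \<Longrightarrow> e \<in> A"
  unfolding inc_def by blast

lemma card_swap:
  assumes "finite A" "a \<in> A" "b \<notin> A"
  shows "card (insert b (A - {a})) = card A"
proof -
  have "card A > 0" using assms card_gt_0_iff by auto
  thus ?thesis using assms by (simp add: card_Diff_singleton)
qed

lemma card_diff_add: "finite V \<Longrightarrow> S \<subseteq> V \<Longrightarrow> card (V - S) + card S = card V"
  by (metis card_Diff_subset card_mono finite_subset le_add_diff_inverse2)

lemma digon_reduce:
  fixes V :: "'v set" and E :: "'e set"
  assumes mg: "multigraph V E ends" and cu: "cubic V E ends"
    and uv: "u \<noteq> v" and pq: "p \<noteq> q" and E: "p \<in> E" "q \<in> E" "eu \<in> E" "ev \<in> E"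
    and ep: "ends p = {u,v}" and eq: "ends q = {u,v}" and eeu: "ends eu = {u,u'}" and eev: "ends ev = {v,v'}"
    and u': "u' \<noteq> u" "u' \<noteq> v" and v': "v' \<noteq> u" "v' \<noteq> v" and u'v': "u' \<noteq> v'"
  shows "\<exists>(V'::'v set) (E'::'e set) ends'. multigraph V' E' ends' \<and> cubic V' E' ends' \<and> card V' + 2 = card V
     \<and> ncl V' E' ends' \<le> ncl V E ends \<and> nu 2 E' ends' + 2 \<le> nu 2 E ends"
proof -
  have fV: "finite V" and fE: "finite E" using mg by (auto simp: multigraph_def)
  have uV: "u \<in> V" and vV: "v \<in> V" and u'V: "u' \<in> V" and v'V: "v' \<in> V"
    using mg_inV[OF mg] E ep eeu eev by auto
  have d1: "distinct [p,q,eu]" using pq ep eq eeu u' by (auto simp: doubleton_eq_iff)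
  have d2: "distinct [p,q,ev]" using pq ep eq eev v' by (auto simp: doubleton_eq_iff)
  have Iu: "inc E ends u = {p,q,eu}"
    by (rule cubic_inc_eq[OF mg cu uV d1]) (use E ep eq eeu in \<open>simp add: inc_def\<close>)
  have Iv: "inc E ends v = {p,q,ev}"
    by (rule cubic_inc_eq[OF mg cu vV d2]) (use E ep eq eev in \<open>simp add: inc_def\<close>)
  have euev: "eu \<noteq> ev" using eeu eev uv v' by (auto simp: doubleton_eq_iff)
  have notu: "\<And>e. e \<in> E \<Longrightarrow> e \<notin> {p,q,eu} \<Longrightarrow> u \<notin> ends e" using Iu in_inc by fastforce
  have notv: "\<And>e. e \<in> E \<Longrightarrow> e \<notin> {p,q,ev} \<Longrightarrow> v \<notin> ends e" using Iv in_inc by fastforce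
  define V' where "V' = V - {u,v}"
  define E' where "E' = E - {p,q,ev}"
  define ends' where "ends' = ends(eu := {u',v'})"
  have mg': "multigraph V' E' ends'"
    unfolding multigraph_def
  proof (intro conjI)
    show "finite V'" "finite E'" using fV fE unfolding V'_def E'_def by auto
    show "\<forall>e\<in>E'. ends' e \<subseteq> V' \<and> card (ends' e) = 2"
    proof
    fix e assume e: "e \<in> E'"
    show "ends' e \<subseteq> V' \<and> card (ends' e) = 2"
    proof (cases "e = eu")
      case True thus ?thesis using u'V v'V u' v' u'v' unfolding ends'_def V'_def by auto
    next
      case False
      hence "u \<notin> ends e" "v \<notin> ends e" using notu notv e unfolding E'_def by auto
      thus ?thesis using mg e False unfolding multigraph_def ends'_def V'_def E'_def by auto
    qed
    qed
  qed
  have incv': "{e\<in>E'. v' \<in> ends' e} = insert eu ({e\<in>E. v' \<in> ends e} - {ev})"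
  proof -
    have "e \<in> E' \<and> v' \<in> ends' e \<longleftrightarrow> e \<in> insert eu ({e\<in>E. v' \<in> ends e} - {ev})" for e
      using E eev eeu u' v' u'v' d1 d2 euev unfolding E'_def ends'_def by (cases "e = eu"; cases "e = p"; cases "e = q"; auto simp: ep eq)
    thus ?thesis by blast
  qed
  have incy: "{e\<in>E'. y \<in> ends' e} = {e\<in>E. y \<in> ends e}" if "y \<in> V'" "y \<noteq> v'" for y
  proof -
    have "y \<noteq> u" "y \<noteq> v" using that unfolding V'_def by auto
    hence "e \<in> E' \<and> y \<in> ends' e \<longleftrightarrow> e \<in> E \<and> y \<in> ends e" for e
      using E eev eeu that(2) d1 d2 euev unfolding E'_def ends'_def by (cases "e = eu"; cases "e = p"; cases "e = q"; cases "e = ev"; auto simp: ep eq)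
    thus ?thesis by blast
  qed
  have cu': "cubic V' E' ends'"
    unfolding cubic_def degree_def
  proof
    fix y assume y: "y \<in> V'"
    have yV: "y \<in> V" using y unfolding V'_def by auto
    have d3: "card {e\<in>E. y \<in> ends e} = 3" using cu yV unfolding cubic_def degree_def by auto
    show "card {e\<in>E'. y \<in> ends' e} = 3"
    proof (cases "y = v'")
      case True
      have "finite {e\<in>E. v' \<in> ends e}" using fE by auto
      moreover have "ev \<in> {e\<in>E. v' \<in> ends e}" using E eev by auto
      moreover have "eu \<notin> {e\<in>E. v' \<in> ends e}" using eeu v' u'v' by auto
      ultimately show ?thesis using True incv' d3 card_swap by metis
    next
      case False thus ?thesis using incy[OF y] d3 by simp
    qed
  qed
  have card: "card V' + 2 = card V" unfolding V'_def using card_diff_add[OF fV, of "{u,v}"] uV vV uv by simp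
  define \<pi> where "\<pi> = (\<lambda>x. if x = u then v' else if x = v then u' else x)"
  define \<phi> where "\<phi> = (\<lambda>e. if e = ev then eu else e)"
  have pis: "\<pi> u = v'" "\<pi> v = u'" "\<pi> u' = u'" "\<pi> v' = v'"
    unfolding \<pi>_def using uv u' v' by auto
  have ncl: "ncl V' E' ends' \<le> ncl V E ends"
  proof (rule ncl_mono)
    show "V' \<subseteq> V" unfolding V'_def by auto
    show "finite V" by (rule fV)
    fix y assume yV': "y \<in> V'" and c': "claw_at V' E' ends' y"
    have yu: "y \<noteq> u" "y \<noteq> v" and yV: "y \<in> V" using yV' unfolding V'_def by auto
    show "claw_at V E ends y"
    proof (rule ccontr)
      assume "\<not> claw_at V E ends y"
      hence w: "witness E ends y" using noclaw_witness[OF mg cu yV] by auto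
      have eu'E': "eu \<in> E'" using E d1 euev unfolding E'_def by auto
      have adjeu: "adjacent E' ends' u' v'" "adjacent E' ends' v' u'"
        using eu'E' adjI[of eu E' ends' u' v'] adjI[of eu E' ends' v' u'] unfolding ends'_def
        by (auto simp: insert_commute)
      have other: "\<And>e. e \<in> E \<Longrightarrow> e \<notin> {p,q,eu,ev} \<Longrightarrow> e \<in> E' \<and> ends' e = ends e \<and> \<pi> ` ends e = ends e"
      proof -
        fix e assume "e \<in> E" "e \<notin> {p,q,eu,ev}"
        moreover hence "u \<notin> ends e" "v \<notin> ends e" using notu notv by auto
        ultimately show "e \<in> E' \<and> ends' e = ends e \<and> \<pi> ` ends e = ends e"
          unfolding E'_def ends'_def \<pi>_def by auto
      qed
      have "witness E' ends' y"
      proof (rule witness_pi[OF w, where \<phi> = \<phi> and \<pi> = \<pi>])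
        fix e assume e: "e \<in> E" "y \<in> ends e"
        show "\<phi> e \<in> E' \<and> ends' (\<phi> e) = \<pi> ` ends e"
        proof -
          have "e \<noteq> p" "e \<noteq> q" using e yu ep eq by auto
          moreover have "e = ev \<Longrightarrow> ?thesis" using eu'E'
            by (simp add: \<phi>_def ends'_def pis eev euev)
          moreover have "e = eu \<Longrightarrow> ?thesis" using eu'E'
            by (simp add: \<phi>_def ends'_def pis eeu euev insert_commute)
          moreover have "e \<notin> {p,q,eu,ev} \<Longrightarrow> ?thesis" using other[OF e(1)] unfolding \<phi>_def by auto
          ultimately show ?thesis by blast
        qed
      next
        fix e1 e2 assume "e1 \<in> E" "y \<in> ends e1" "e2 \<in> E" "y \<in> ends e2" "\<phi> e1 = \<phi> e2"
        thus "e1 = e2" using eeu eev yu u' v' u'v' unfolding \<phi>_def by (auto split: if_splits)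
      next
        show "\<pi> y = y" using yu unfolding \<pi>_def by auto
      next
        fix e r s assume e: "e \<in> E" "ends e = {r, s}"
        show "\<pi> r = \<pi> s \<or> adjacent E' ends' (\<pi> r) (\<pi> s)"
        proof (cases "e \<in> {p,q,eu,ev}")
          case True
          hence "e = p \<or> e = q \<or> e = eu \<or> e = ev" by simp
          hence "{r,s} = {u,v} \<or> {r,s} = {u,u'} \<or> {r,s} = {v,v'}" using e(2) ep eq eeu eev by metis
          hence "(r = u \<and> s = v) \<or> (r = v \<and> s = u) \<or> (r = u \<and> s = u') \<or> (r = u' \<and> s = u)
              \<or> (r = v \<and> s = v') \<or> (r = v' \<and> s = v)" by (simp add: doubleton_eq_iff)
          thus ?thesis by (elim disjE) (simp_all add: pis adjeu)
        next
          case False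
          hence "u \<notin> ends e" "v \<notin> ends e" using notu notv e(1) by auto
          hence "e \<in> E'" "ends' e = {r,s}" "\<pi> r = r" "\<pi> s = s" using other[OF e(1)] False e(2)
            unfolding \<pi>_def by auto
          thus ?thesis using adjI[of e E' ends' r s] by auto
        qed
      qed
      thus False using witness_noclaw[OF mg' cu'] c' by blast
    qed
  qed
  have nu: "nu 2 E' ends' + 2 \<le> nu 2 E ends"
  proof (rule nu_step[OF fE])
    show "finite E'" using fE unfolding E'_def by auto
    fix F' col' assume F': "F' \<subseteq> E'" and p': "proper ends' F' col'"
    have pF': "p \<notin> F'" "q \<notin> F'" "ev \<notin> F'" using F' unfolding E'_def by auto
    have F'E: "F' \<subseteq> E" using F' unfolding E'_def by auto
    have fF': "finite F'" using F'E fE by (auto intro: finite_subset)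
    have eqends: "\<And>e. e \<in> F' \<Longrightarrow> e \<noteq> eu \<Longrightarrow> ends' e = ends e" unfolding ends'_def by auto
    have F'uv: "\<And>e x. e \<in> F' \<Longrightarrow> e \<noteq> eu \<Longrightarrow> x \<in> ends e \<Longrightarrow> x \<noteq> u \<and> x \<noteq> v"
      using notu notv F'E pF' by blast
    show "\<exists>F col. F \<subseteq> E \<and> proper ends F col \<and> card F' + 2 \<le> card F"
    proof (cases "eu \<in> F'")
      case True
      define \<alpha> where "\<alpha> = col' eu"
      have \<alpha>: "\<alpha> < 2" using proper_lt2[OF p' True] unfolding \<alpha>_def .
      define F where "F = F' \<union> {p, ev}"
      define col where "col = col'(p := 1 - \<alpha>, ev := \<alpha>)"
      have "card F = card F' + 2" unfolding F_def using fF' pF' d2 by (simp add: card_insert_if)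
      moreover have "F \<subseteq> E" unfolding F_def using F'E E by auto
      moreover have "proper ends F col"
      proof (rule proper_intro_local)
        fix e assume "e \<in> F" thus "col e < 2" using proper_lt2[OF p'] \<alpha> unfolding F_def col_def by auto
      next
        fix x e1 e2 assume e12: "e1 \<in> F" "e2 \<in> F" "e1 \<noteq> e2" "x \<in> ends e1" "x \<in> ends e2"
        show "col e1 \<noteq> col e2"
        proof (cases "x = u \<or> x = v")
          case True
          have "q \<notin> F" using pF' pq d2 unfolding F_def by auto
          hence "e1 \<in> {p,eu,ev}" "e2 \<in> {p,eu,ev}"
            using True e12 F'uv unfolding F_def by (auto simp: ep eev)
          moreover have "x = u \<Longrightarrow> ev \<notin> {e1,e2}" using e12 eev v' uv by auto
          moreover have "x = v \<Longrightarrow> eu \<notin> {e1,e2}" using e12 eeu u' uv by auto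
          moreover have "col p = 1 - \<alpha>" "col ev = \<alpha>" "col eu = \<alpha>"
            unfolding col_def \<alpha>_def using d2 euev d1 by auto
          moreover have "1 - \<alpha> \<noteq> \<alpha>" using \<alpha> by arith
          ultimately show ?thesis using True e12(3) by auto
        next
          case False
          show ?thesis
          proof (rule pat_transfer[OF p' e12(1,2,4,5), where \<phi> = \<phi>])
            fix e assume e: "e \<in> F" "x \<in> ends e"
            show "\<phi> e \<in> F' \<and> x \<in> ends' (\<phi> e) \<and> col' (\<phi> e) = col e"
            proof -
              have "e \<noteq> p" using e False ep by auto
              moreover have "e = ev \<Longrightarrow> ?thesis" using True e False eev euev d2
                unfolding \<phi>_def ends'_def col_def \<alpha>_def by auto
              moreover have "e = eu \<Longrightarrow> ?thesis" using True e False eeu euev d1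
                unfolding \<phi>_def ends'_def col_def by auto
              moreover have "e \<noteq> eu \<Longrightarrow> e \<noteq> ev \<Longrightarrow> e \<noteq> p \<Longrightarrow> ?thesis" using e pF' d2
                unfolding \<phi>_def ends'_def col_def F_def by auto
              ultimately show ?thesis by blast
            qed
          next
            show "\<phi> e1 \<noteq> \<phi> e2" using e12 False eeu eev u' v' u'v' unfolding \<phi>_def by auto
          qed
        qed
      qed
      ultimately show ?thesis by auto
    next
      case False
      define F where "F = F' \<union> {p, q}"
      define col where "col = col'(p := 0, q := 1)"
      have "card F = card F' + 2" unfolding F_def using fF' pF' pq by (simp add: card_insert_if)
      moreover have "F \<subseteq> E" unfolding F_def using F'E E by auto
      moreover have "proper ends F col"
      proof (rule proper_intro_local)
        fix e assume "e \<in> F" thus "col e < 2" using proper_lt2[OF p'] unfolding F_def col_def by auto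
      next
        fix x e1 e2 assume e12: "e1 \<in> F" "e2 \<in> F" "e1 \<noteq> e2" "x \<in> ends e1" "x \<in> ends e2"
        show "col e1 \<noteq> col e2"
        proof (cases "x = u \<or> x = v")
          case True
          have "e1 \<in> {p,q}" "e2 \<in> {p,q}"
            using True e12 F'uv False unfolding F_def by auto
          thus ?thesis using e12(3) pq unfolding col_def by auto
        next
          case xn: False
          show ?thesis
          proof (rule pat_transfer[OF p' e12(1,2,4,5), where \<phi> = id])
            fix e assume e: "e \<in> F" "x \<in> ends e"
            show "id e \<in> F' \<and> x \<in> ends' (id e) \<and> col' (id e) = col e"
              using e xn False pF' ep eq unfolding F_def col_def ends'_def by auto
          next
            show "id e1 \<noteq> id e2" using e12 by simp
          qed
        qed
      qed
      ultimately show ?thesis by auto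
    qed
  qed
  show ?thesis using mg' cu' card ncl nu by blast
qed


lemma path_ext:
  assumes p0: "proper ends F0 col0"
    and d: "x1 \<noteq> m" "m \<noteq> x2" "x1 \<noteq> x2"
    and f1: "ends f1 = {x1, m}" and f2: "ends f2 = {m, x2}"
    and nf: "f1 \<notin> F0" "f2 \<notin> F0"
    and at1: "\<And>e. e \<in> F0 \<Longrightarrow> x1 \<in> ends e \<Longrightarrow> e = g1"
    and at2: "\<And>e. e \<in> F0 \<Longrightarrow> x2 \<in> ends e \<Longrightarrow> e = g2"
    and atm: "\<And>e. e \<in> F0 \<Longrightarrow> m \<notin> ends e"
    and g12: "g1 \<in> F0 \<Longrightarrow> g2 \<in> F0 \<Longrightarrow> col0 g1 \<noteq> col0 g2"
  shows "proper ends (F0 \<union> {f1, f2})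
     (col0(f1 := (if g1 \<in> F0 then 1 - col0 g1 else if g2 \<in> F0 then col0 g2 else 0),
           f2 := 1 - (if g1 \<in> F0 then 1 - col0 g1 else if g2 \<in> F0 then col0 g2 else 0)))"
    (is "proper ends ?F ?col")
proof -
  define \<kappa> where "\<kappa> = (if g1 \<in> F0 then 1 - col0 g1 else if g2 \<in> F0 then col0 g2 else 0)"
  define col where "col = col0(f1 := \<kappa>, f2 := 1 - \<kappa>)"
  have eqc: "?col = col" unfolding col_def \<kappa>_def ..
  have f12: "f1 \<noteq> f2" using f1 f2 d by (auto simp: doubleton_eq_iff)
  have k2: "\<kappa> < 2" unfolding \<kappa>_def using proper_lt2[OF p0] by auto
  have c1: "col f1 = \<kappa>" "col f2 = 1 - \<kappa>" using f12 unfolding col_def by auto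
  have c0: "\<And>e. e \<in> F0 \<Longrightarrow> col e = col0 e" using nf unfolding col_def by auto
  have kk: "\<kappa> \<noteq> 1 - \<kappa>" using k2 by arith
  have g1c: "g1 \<in> F0 \<Longrightarrow> col0 g1 \<noteq> \<kappa>" unfolding \<kappa>_def using proper_lt2[OF p0] by (auto; arith)
  have g2c: "g2 \<in> F0 \<Longrightarrow> col0 g2 \<noteq> 1 - \<kappa>" unfolding \<kappa>_def using proper_lt2[OF p0, of g2] g12
    proper_lt2[OF p0, of g1] by (auto; arith)
  have "proper ends ?F col"
  proof (rule proper_intro_local)
    fix e assume "e \<in> ?F" thus "col e < 2" using proper_lt2[OF p0] k2 c1 c0 by auto
  next
    fix x e1 e2 assume e: "e1 \<in> ?F" "e2 \<in> ?F" "e1 \<noteq> e2" "x \<in> ends e1" "x \<in> ends e2"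
    have key: "col e1 \<noteq> col e2" if "e1 = f1" "e2 \<in> ?F" "e1 \<noteq> e2" "x \<in> ends e1" "x \<in> ends e2" for e1 e2
    proof (cases "e2 = f2")
      case True thus ?thesis using that c1 kk by simp
    next
      case False
      hence e2F: "e2 \<in> F0" using that by auto
      have "x = x1 \<or> x = m" using that f1 by auto
      hence "x = x1" using atm[OF e2F] that by auto
      hence "e2 = g1" using at1[OF e2F] that by auto
      hence "col e2 = col0 g1" "g1 \<in> F0" using c0[OF e2F] e2F by auto
      moreover have "col e1 = \<kappa>" using c1 that by simp
      ultimately show ?thesis using g1c by simp
    qed
    have key2: "col e1 \<noteq> col e2" if "e1 = f2" "e2 \<in> ?F" "e1 \<noteq> e2" "x \<in> ends e1" "x \<in> ends e2" for e1 e2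
    proof (cases "e2 = f1")
      case True thus ?thesis using that c1 kk by simp
    next
      case False
      hence e2F: "e2 \<in> F0" using that by auto
      have "x = x2 \<or> x = m" using that f2 by auto
      hence "x = x2" using atm[OF e2F] that by auto
      hence "e2 = g2" using at2[OF e2F] that by auto
      hence "col e2 = col0 g2" "g2 \<in> F0" using c0[OF e2F] e2F by auto
      moreover have "col e1 = 1 - \<kappa>" using c1 that by simp
      ultimately show ?thesis using g2c by simp
    qed
    show "col e1 \<noteq> col e2"
    proof (cases "e1 \<in> F0 \<and> e2 \<in> F0")
      case True thus ?thesis using proper_ne[OF p0 _ _ e(3,4,5)] c0 by auto
    next
      case False
      hence "e1 \<in> {f1,f2} \<or> e2 \<in> {f1,f2}" using e by auto
      thus ?thesis using key[of e1 e2] key2[of e1 e2] key[of e2 e1] key2[of e2 e1] e by auto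
    qed
  qed
  thus ?thesis using eqc by simp
qed

lemma tri_reduce:
  fixes V :: "'v set" and E :: "'e set"
  assumes mg: "multigraph V E ends" and cu: "cubic V E ends"
    and abc: "a \<noteq> b" "b \<noteq> c" "a \<noteq> c"
    and E: "eab \<in> E" "ebc \<in> E" "eca \<in> E" "ea \<in> E" "eb \<in> E" "ec \<in> E"
    and en: "ends eab = {a,b}" "ends ebc = {b,c}" "ends eca = {c,a}"
      "ends ea = {a,a'}" "ends eb = {b,b'}" "ends ec = {c,c'}"
    and a': "a' \<noteq> a" "a' \<noteq> b" "a' \<noteq> c" and b': "b' \<noteq> a" "b' \<noteq> b" "b' \<noteq> c"
    and c': "c' \<noteq> a" "c' \<noteq> b" "c' \<noteq> c"
  shows "\<exists>(V'::'v set) (E'::'e set) ends'. multigraph V' E' ends' \<and> cubic V' E' ends' \<and> card V' + 2 = card V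
     \<and> ncl V' E' ends' \<le> ncl V E ends + 1 \<and> nu 2 E' ends' + 2 \<le> nu 2 E ends"
proof -
  have fV: "finite V" and fE: "finite E" using mg by (auto simp: multigraph_def)
  have aV: "a \<in> V" and bV: "b \<in> V" and cV: "c \<in> V" and a'V: "a' \<in> V" and b'V: "b' \<in> V"
    using mg_inV[OF mg] E en by auto
  have d6: "distinct [eab,ebc,eca,ea,eb,ec]" using en abc a' b' c' by (auto simp: doubleton_eq_iff)
  have Ia: "inc E ends a = {eab,eca,ea}"
    by (rule cubic_inc_eq[OF mg cu aV]) (use E en d6 in \<open>simp_all add: inc_def\<close>)
  have Ib: "inc E ends b = {eab,ebc,eb}"
    by (rule cubic_inc_eq[OF mg cu bV]) (use E en d6 in \<open>simp_all add: inc_def\<close>)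
  have Ic: "inc E ends c = {ebc,eca,ec}"
    by (rule cubic_inc_eq[OF mg cu cV]) (use E en d6 in \<open>simp_all add: inc_def\<close>)
  have nota: "\<And>e. e \<in> E \<Longrightarrow> e \<notin> {eab,eca,ea} \<Longrightarrow> a \<notin> ends e" using Ia in_inc by fastforce
  have notb: "\<And>e. e \<in> E \<Longrightarrow> e \<notin> {eab,ebc,eb} \<Longrightarrow> b \<notin> ends e" using Ib in_inc by fastforce
  have notc: "\<And>e. e \<in> E \<Longrightarrow> e \<notin> {ebc,eca,ec} \<Longrightarrow> c \<notin> ends e" using Ic in_inc by fastforce
  define V' where "V' = V - {a,b}"
  define E' where "E' = E - {eab,ebc,eca}"
  define ends' where "ends' = ends(ea := {c,a'}, eb := {c,b'})"
  have e'a: "ends' ea = {c,a'}" and e'b: "ends' eb = {c,b'}" unfolding ends'_def using d6 by auto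
  have e'o: "\<And>e. e \<noteq> ea \<Longrightarrow> e \<noteq> eb \<Longrightarrow> ends' e = ends e" unfolding ends'_def by auto
  have E'm: "\<And>e. e \<in> E' \<longleftrightarrow> e \<in> E \<and> e \<noteq> eab \<and> e \<noteq> ebc \<and> e \<noteq> eca" unfolding E'_def by auto
  have mg': "multigraph V' E' ends'"
    unfolding multigraph_def
  proof (intro conjI)
    show "finite V'" "finite E'" using fV fE unfolding V'_def E'_def by auto
    show "\<forall>e\<in>E'. ends' e \<subseteq> V' \<and> card (ends' e) = 2"
    proof
      fix e assume e: "e \<in> E'"
      show "ends' e \<subseteq> V' \<and> card (ends' e) = 2"
      proof (cases "e = ea \<or> e = eb")
        case True
        hence "ends' e = {c,a'} \<or> ends' e = {c,b'}" using e'a e'b by auto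
        moreover have "{c,a'} \<subseteq> V'" "{c,b'} \<subseteq> V'" using cV a'V b'V a' b' abc unfolding V'_def by auto
        moreover have "card {c,a'} = 2" "card {c,b'} = 2" using a' b' by auto
        ultimately show ?thesis by auto
      next
        case False
        have eE: "e \<in> E" "e \<noteq> eab" "e \<noteq> ebc" "e \<noteq> eca" using e E'm by auto
        hence "a \<notin> ends e" "b \<notin> ends e" using nota notb False by auto
        moreover have "ends' e = ends e" using e'o False by auto
        moreover have "ends e \<subseteq> V" "card (ends e) = 2" using mg eE(1) unfolding multigraph_def by auto
        ultimately show ?thesis unfolding V'_def by auto
      qed
    qed
  qed
  have incc: "{e\<in>E'. c \<in> ends' e} = {ea,eb,ec}"
  proof -
    have "e \<in> E' \<and> c \<in> ends' e \<longleftrightarrow> e \<in> {ea,eb,ec}" for e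
    proof (cases "e = ea \<or> e = eb")
      case True thus ?thesis using e'a e'b E'm E d6 by auto
    next
      case False
      hence "ends' e = ends e" using e'o by auto
      moreover have "e \<in> E \<and> c \<in> ends e \<longleftrightarrow> e \<in> {ebc,eca,ec}" using Ic unfolding inc_def by blast
      ultimately show ?thesis using False E'm d6 by auto
    qed
    thus ?thesis by blast
  qed
  have incy: "{e\<in>E'. y \<in> ends' e} = {e\<in>E. y \<in> ends e}" if "y \<in> V'" "y \<noteq> c" for y
  proof -
    have yab: "y \<noteq> a" "y \<noteq> b" using that unfolding V'_def by auto
    have "e \<in> E' \<and> y \<in> ends' e \<longleftrightarrow> e \<in> E \<and> y \<in> ends e" for e
    proof (cases "e = ea \<or> e = eb")
      case True thus ?thesis using e'a e'b E'm E d6 en yab that(2) by auto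
    next
      case False
      hence "ends' e = ends e" using e'o by auto
      thus ?thesis using E'm en yab that(2) by auto
    qed
    thus ?thesis by blast
  qed
  have cu': "cubic V' E' ends'"
    unfolding cubic_def degree_def
  proof
    fix y assume y: "y \<in> V'"
    have yV: "y \<in> V" using y unfolding V'_def by auto
    have d3: "card {e\<in>E. y \<in> ends e} = 3" using cu yV unfolding cubic_def degree_def by auto
    show "card {e\<in>E'. y \<in> ends' e} = 3"
    proof (cases "y = c")
      case True thus ?thesis using incc d6 by simp
    next
      case False thus ?thesis using incy[OF y] d3 by simp
    qed
  qed
  have card: "card V' + 2 = card V" unfolding V'_def using card_diff_add[OF fV, of "{a,b}"] aV bV abc by simp
  define \<pi> where "\<pi> = (\<lambda>x. if x = a \<or> x = b then c else x)"
  have pis: "\<pi> a = c" "\<pi> b = c" "\<pi> c = c" "\<pi> a' = a'" "\<pi> b' = b'" unfolding \<pi>_def using a' b' abc by auto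
  have clawsub: "{y\<in>V'. claw_at V' E' ends' y} \<subseteq> insert c {y\<in>V. claw_at V E ends y}"
  proof
    fix y assume "y \<in> {y\<in>V'. claw_at V' E' ends' y}"
    hence yV': "y \<in> V'" and c': "claw_at V' E' ends' y" by auto
    have yab: "y \<noteq> a" "y \<noteq> b" and yV: "y \<in> V" using yV' unfolding V'_def by auto
    show "y \<in> insert c {y\<in>V. claw_at V E ends y}"
    proof (cases "y = c")
      case False
      have "claw_at V E ends y"
      proof (rule ccontr)
        assume "\<not> claw_at V E ends y"
        hence w: "witness E ends y" using noclaw_witness[OF mg cu yV] by auto
        have adjea: "adjacent E' ends' c a'" using adjI[of ea E' ends' c a'] e'a E'm E d6 by auto
        have adjeb: "adjacent E' ends' c b'" using adjI[of eb E' ends' c b'] e'b E'm E d6 by auto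
        have "witness E' ends' y"
        proof (rule witness_pi[OF w, where \<phi> = id and \<pi> = \<pi>])
          fix e assume e: "e \<in> E" "y \<in> ends e"
          have "e \<noteq> eab" "e \<noteq> ebc" "e \<noteq> eca" using e en yab False by auto
          hence eE': "e \<in> E'" using E'm e by auto
          show "id e \<in> E' \<and> ends' (id e) = \<pi> ` ends e"
          proof (cases "e = ea \<or> e = eb")
            case True thus ?thesis using eE' e'a e'b en pis by auto
          next
            case F2: False
            hence "a \<notin> ends e" "b \<notin> ends e" using nota notb e(1) \<open>e \<noteq> eab\<close> \<open>e \<noteq> ebc\<close> \<open>e \<noteq> eca\<close> by auto
            hence "\<pi> ` ends e = ends e" unfolding \<pi>_def by auto
            thus ?thesis using eE' e'o F2 by auto
          qed
        next
          fix e1 e2 assume "id e1 = id e2" thus "e1 = e2" by simp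
        next
          show "\<pi> y = y" using yab unfolding \<pi>_def by auto
        next
          fix e r s assume e: "e \<in> E" "ends e = {r, s}"
          show "\<pi> r = \<pi> s \<or> adjacent E' ends' (\<pi> r) (\<pi> s)"
          proof (cases "e \<in> {eab,ebc,eca,ea,eb}")
            case True
            hence "e = eab \<or> e = ebc \<or> e = eca \<or> e = ea \<or> e = eb" by simp
            hence "{r,s} = {a,b} \<or> {r,s} = {b,c} \<or> {r,s} = {c,a} \<or> {r,s} = {a,a'} \<or> {r,s} = {b,b'}"
              using e(2) en by metis
            hence "(r = a \<and> s = b) \<or> (r = b \<and> s = a) \<or> (r = b \<and> s = c) \<or> (r = c \<and> s = b)
              \<or> (r = c \<and> s = a) \<or> (r = a \<and> s = c) \<or> (r = a \<and> s = a') \<or> (r = a' \<and> s = a)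
              \<or> (r = b \<and> s = b') \<or> (r = b' \<and> s = b)" by (simp add: doubleton_eq_iff)
            thus ?thesis using adjea adjeb adjacent_sym[of E' ends'] by (elim disjE) (simp_all add: pis)
          next
            case F2: False
            hence "a \<notin> ends e" "b \<notin> ends e" using nota notb e(1) by auto
            hence "e \<in> E'" "ends' e = {r,s}" "\<pi> r = r" "\<pi> s = s" using F2 e E'm e'o
              unfolding \<pi>_def by auto
            thus ?thesis using adjI[of e E' ends' r s] by auto
          qed
        qed
        thus False using witness_noclaw[OF mg' cu'] c' by blast
      qed
      thus ?thesis using yV by auto
    qed simp
  qed
  have ncl: "ncl V' E' ends' \<le> ncl V E ends + 1"
  proof -
    have "ncl V' E' ends' \<le> card (insert c {y\<in>V. claw_at V E ends y})"
      unfolding ncl_def using clawsub fV by (intro card_mono) auto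
    also have "\<dots> \<le> ncl V E ends + 1" unfolding ncl_def using card_insert_le_m1 fV
      by (simp add: card_insert_if)
    finally show ?thesis .
  qed
  have nu: "nu 2 E' ends' + 2 \<le> nu 2 E ends"
  proof (rule nu_step[OF fE])
    show "finite E'" using fE unfolding E'_def by auto
    fix F' col' assume F': "F' \<subseteq> E'" and p': "proper ends' F' col'"
    have F'E: "F' \<subseteq> E" using F' unfolding E'_def by auto
    have fF': "finite F'" using F'E fE by (auto intro: finite_subset)
    have nt: "eab \<notin> F'" "ebc \<notin> F'" "eca \<notin> F'" using F' E'm by auto
    have ata: "\<And>e. e \<in> F' \<Longrightarrow> a \<in> ends e \<Longrightarrow> e = ea" using nota F'E nt by blast
    have atb: "\<And>e. e \<in> F' \<Longrightarrow> b \<in> ends e \<Longrightarrow> e = eb" using notb F'E nt by blast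
    have atc: "\<And>e. e \<in> F' \<Longrightarrow> c \<in> ends e \<Longrightarrow> e = ec" using notc F'E nt by blast
    have tr: "\<And>e x. e \<in> F' \<Longrightarrow> x \<in> ends e \<Longrightarrow> x \<noteq> a \<Longrightarrow> x \<noteq> b \<Longrightarrow> x \<in> ends' e"
    proof -
      fix e x assume h: "e \<in> F'" "x \<in> ends e" "x \<noteq> a" "x \<noteq> b"
      show "x \<in> ends' e"
      proof (cases "e = ea")
        case True thus ?thesis using h e'a en by simp
      next
        case False
        show ?thesis
        proof (cases "e = eb")
          case True thus ?thesis using h e'b en by simp
        next
          case F2: False thus ?thesis using h e'o False by simp
        qed
      qed
    qed
    have p0: "proper ends F' col'"
    proof (rule proper_intro_local)
      fix e assume "e \<in> F'" thus "col' e < 2" using proper_lt2[OF p'] by auto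
    next
      fix x e1 e2 assume e: "e1 \<in> F'" "e2 \<in> F'" "e1 \<noteq> e2" "x \<in> ends e1" "x \<in> ends e2"
      show "col' e1 \<noteq> col' e2"
      proof (cases "x = a \<or> x = b \<or> x = c")
        case True thus ?thesis using ata atb atc e by metis
      next
        case False thus ?thesis using proper_ne[OF p' e(1,2,3)] tr e by blast
      qed
    qed
    have cab: "ea \<in> F' \<Longrightarrow> eb \<in> F' \<Longrightarrow> col' ea \<noteq> col' eb"
      using proper_ne[OF p' _ _ _ _ _, of ea eb c] e'a e'b d6 by auto
    have cac: "ea \<in> F' \<Longrightarrow> ec \<in> F' \<Longrightarrow> col' ea \<noteq> col' ec"
      using proper_ne[OF p' _ _ _ _ _, of ea ec c] e'a e'o en d6 by auto
    have cbc: "eb \<in> F' \<Longrightarrow> ec \<in> F' \<Longrightarrow> col' eb \<noteq> col' ec"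
      using proper_ne[OF p' _ _ _ _ _, of eb ec c] e'b e'o en d6 by auto
    have not3: "ea \<notin> F' \<or> eb \<notin> F' \<or> ec \<notin> F'"
    proof (rule ccontr)
      assume "\<not> ?thesis"
      hence "ea \<in> F'" "eb \<in> F'" "ec \<in> F'" by auto
      thus False using cab cac cbc proper_lt2[OF p', of ea] proper_lt2[OF p', of eb] proper_lt2[OF p', of ec]
        by arith
    qed
    have fin: "\<And>f1 f2 col. f1 \<in> {eab,ebc,eca} \<Longrightarrow> f2 \<in> {eab,ebc,eca} \<Longrightarrow> f1 \<noteq> f2 \<Longrightarrow>
       proper ends (F' \<union> {f1,f2}) col \<Longrightarrow> \<exists>F col. F \<subseteq> E \<and> proper ends F col \<and> card F' + 2 \<le> card F"
    proof -
      fix f1 f2 col assume h: "f1 \<in> {eab,ebc,eca}" "f2 \<in> {eab,ebc,eca}" "f1 \<noteq> f2"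
        "proper ends (F' \<union> {f1,f2}) col"
      have "f1 \<notin> F'" "f2 \<notin> F'" using h nt by auto
      hence "card (F' \<union> {f1,f2}) = card F' + 2" using fF' h(3) by (simp add: card_insert_if)
      moreover have "F' \<union> {f1,f2} \<subseteq> E" using F'E h E by auto
      ultimately show "\<exists>F col. F \<subseteq> E \<and> proper ends F col \<and> card F' + 2 \<le> card F" using h(4)
        by (intro exI[of _ "F' \<union> {f1,f2}"] exI[of _ col]) simp
    qed
    show "\<exists>F col. F \<subseteq> E \<and> proper ends F col \<and> card F' + 2 \<le> card F"
    proof (cases "ec \<notin> F'")
      case True
      have "proper ends (F' \<union> {eca, ebc}) (col'(eca := (if ea \<in> F' then 1 - col' ea else if eb \<in> F' then col' eb else 0),
           ebc := 1 - (if ea \<in> F' then 1 - col' ea else if eb \<in> F' then col' eb else 0)))"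
      proof -
        have "ends eca = {a,c}" "ends ebc = {c,b}" using en by (simp_all add: insert_commute)
        moreover have "\<And>e. e \<in> F' \<Longrightarrow> c \<notin> ends e" using atc True by blast
        ultimately show ?thesis using path_ext[OF p0 abc(3) abc(2)[symmetric] abc(1) _ _ nt(3) nt(2) ata atb _ cab]
          by simp
      qed
      thus ?thesis using fin[of eca ebc] d6 by auto
    next
      case F1: False
      show ?thesis
      proof (cases "ea \<notin> F'")
        case True
        have "proper ends (F' \<union> {eab, eca}) (col'(eab := (if eb \<in> F' then 1 - col' eb else if ec \<in> F' then col' ec else 0),
           eca := 1 - (if eb \<in> F' then 1 - col' eb else if ec \<in> F' then col' ec else 0)))"
        proof -
          have "ends eab = {b,a}" "ends eca = {a,c}" using en by (simp_all add: insert_commute)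
          moreover have "\<And>e. e \<in> F' \<Longrightarrow> a \<notin> ends e" using ata True by blast
          ultimately show ?thesis using path_ext[OF p0 abc(1)[symmetric] abc(3) abc(2) _ _ nt(1) nt(3) atb atc _ cbc]
            by simp
        qed
        thus ?thesis using fin[of eab eca] d6 by auto
      next
        case False
        hence "eb \<notin> F'" using not3 F1 by auto
        have "proper ends (F' \<union> {eab, ebc}) (col'(eab := (if ea \<in> F' then 1 - col' ea else if ec \<in> F' then col' ec else 0),
           ebc := 1 - (if ea \<in> F' then 1 - col' ea else if ec \<in> F' then col' ec else 0)))"
        proof -
          have "\<And>e. e \<in> F' \<Longrightarrow> b \<notin> ends e" using atb \<open>eb \<notin> F'\<close> by blast
          thus ?thesis using path_ext[OF p0 abc(1) abc(2) abc(3) en(1) en(2) nt(1) nt(2) ata atc _ cac]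
            by simp
        qed
        thus ?thesis using fin[of eab ebc] d6 by auto
      qed
    qed
  qed
  show ?thesis using mg' cu' card ncl nu by blast
qed


lemma cc_ext:
  assumes F': "F' \<subseteq> E - {exa, eaa1, eaa2}" and p': "proper ends' F' col'" and fE: "finite E"
    and inF: "exb \<in> F'"
    and E: "exa \<in> E" "eaa1 \<in> E"
    and ends': "ends' exb = {b,a1}" "\<And>e. e \<noteq> exb \<Longrightarrow> e \<noteq> exc \<Longrightarrow> ends' e = ends e"
    and en: "ends exa = {x,a}" "ends exb = {x,b}" "ends eaa1 = {a,a1}"
    and Ix: "inc E ends x = {exa,exb,exc}" and Ia: "inc E ends a = {exa,eaa1,eaa2}"
    and dx: "distinct [exa,exb,exc]" and da: "distinct [exa,eaa1,eaa2]" and dd: "exb \<noteq> eaa1"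
    and dv: "x \<noteq> a" "a1 \<noteq> x" "a1 \<noteq> b" "b \<noteq> a"
  shows "\<exists>F col. F \<subseteq> E \<and> proper ends F col \<and> card F' + 1 \<le> card F"
proof -
  define \<alpha> where "\<alpha> = col' exb"
  have \<alpha>: "\<alpha> < 2" using proper_lt2[OF p' inF] unfolding \<alpha>_def .
  define F where "F = (F' - {exc}) \<union> {exa, eaa1}"
  define col where "col = col'(exa := 1 - \<alpha>, eaa1 := \<alpha>)"
  have F'E: "F' \<subseteq> E" using F' by auto
  have fF': "finite F'" using F'E fE by (auto intro: finite_subset)
  have nF': "exa \<notin> F'" "eaa1 \<notin> F'" "eaa2 \<notin> F'" using F' by auto
  have ea1: "exa \<noteq> eaa1" using da by simp
  have "card F = card (F' - {exc}) + 2" unfolding F_def using fF' nF' ea1 by (simp add: card_insert_if)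
  moreover have "card F' \<le> card (F' - {exc}) + 1"
    using fF' by (simp add: card_Diff_singleton_if) arith
  ultimately have cardF: "card F' + 1 \<le> card F" by simp
  have FE: "F \<subseteq> E" unfolding F_def using F'E E by auto
  have cl: "col exa = 1 - \<alpha>" "col eaa1 = \<alpha>" "col exb = \<alpha>" unfolding col_def \<alpha>_def using dd dx ea1 by auto
  have co: "\<And>e. e \<noteq> exa \<Longrightarrow> e \<noteq> eaa1 \<Longrightarrow> col e = col' e" unfolding col_def by auto
  have a2: "1 - \<alpha> \<noteq> \<alpha>" using \<alpha> by arith
  have atx: "\<And>e. e \<in> F \<Longrightarrow> x \<in> ends e \<Longrightarrow> e = exa \<or> e = exb"
  proof -
    fix e assume "e \<in> F" "x \<in> ends e"
    hence "e \<in> inc E ends x" "e \<noteq> exc" using FE unfolding inc_def F_def using dx da dd en dv by auto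
    thus "e = exa \<or> e = exb" using Ix by auto
  qed
  have ata: "\<And>e. e \<in> F \<Longrightarrow> a \<in> ends e \<Longrightarrow> e = exa \<or> e = eaa1"
  proof -
    fix e assume "e \<in> F" "a \<in> ends e"
    hence "e \<in> inc E ends a" "e \<noteq> eaa2" using FE nF' unfolding inc_def F_def using dx da dd by auto
    thus "e = exa \<or> e = eaa1" using Ia by auto
  qed
  have exbF: "exb \<in> F" unfolding F_def using inF dx by auto
  have "proper ends F col"
  proof (rule proper_intro_local)
    fix e assume "e \<in> F" thus "col e < 2" using proper_lt2[OF p'] \<alpha> co cl unfolding F_def by (cases "e = exa \<or> e = eaa1") auto
  next
    fix z e1 e2 assume e: "e1 \<in> F" "e2 \<in> F" "e1 \<noteq> e2" "z \<in> ends e1" "z \<in> ends e2"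
    show "col e1 \<noteq> col e2"
    proof (cases "z = x")
      case True
      hence "e1 \<in> {exa,exb}" "e2 \<in> {exa,exb}" using atx e by auto
      thus ?thesis using e(3) cl a2 by auto
    next
      case zx: False
      show ?thesis
      proof (cases "z = a")
        case True
        hence "e1 \<in> {exa,eaa1}" "e2 \<in> {exa,eaa1}" using ata e by auto
        thus ?thesis using e(3) cl a2 by auto
      next
        case za: False
        define \<phi> where "\<phi> = (\<lambda>e. if e = eaa1 then exb else e)"
        show ?thesis
        proof (rule pat_transfer[OF p' e(1,2,4,5), where \<phi> = \<phi>])
          fix e assume h: "e \<in> F" "z \<in> ends e"
          show "\<phi> e \<in> F' \<and> z \<in> ends' (\<phi> e) \<and> col' (\<phi> e) = col e"
          proof (cases "e = eaa1")
            case True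
            hence "z = a1" using h en za by auto
            thus ?thesis using True inF ends' cl unfolding \<phi>_def \<alpha>_def by auto
          next
            case False
            have "e \<noteq> exa" using h en zx za by auto
            hence eF': "e \<in> F'" "e \<noteq> exc" using h False unfolding F_def by auto
            have "z \<in> ends' e"
            proof (cases "e = exb")
              case True thus ?thesis using h en ends' zx by auto
            next
              case False thus ?thesis using h ends'(2) eF' by auto
            qed
            thus ?thesis using eF' False co \<open>e \<noteq> exa\<close> unfolding \<phi>_def by auto
          qed
        next
          show "\<phi> e1 \<noteq> \<phi> e2"
          proof
            assume "\<phi> e1 = \<phi> e2"
            hence "(e1 = eaa1 \<and> e2 = exb) \<or> (e1 = exb \<and> e2 = eaa1)" using e(3) unfolding \<phi>_def
              by (auto split: if_splits)
            thus False using e(4,5) en dv by auto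
          qed
        qed
      qed
    qed
  qed
  thus ?thesis using FE cardF by blast
qed

lemma claw_atI:
  assumes "y \<in> V" "a \<in> V" "b \<in> V" "c \<in> V" "distinct [y,a,b,c]"
    "ea \<in> E" "ends ea = {y,a}" "eb \<in> E" "ends eb = {y,b}" "ec \<in> E" "ends ec = {y,c}"
    "\<not> adjacent E ends a b" "\<not> adjacent E ends a c" "\<not> adjacent E ends b c"
  shows "claw_at V E ends y"
proof -
  have "adjacent E ends y a" "adjacent E ends y b" "adjacent E ends y c"
    using adjI[of ea E ends y a] adjI[of eb E ends y b] adjI[of ec E ends y c] assms by auto
  thus ?thesis unfolding claw_at_def using assms by (intro exI[of _ a] exI[of _ b] exI[of _ c]) simp
qed

lemma cc_reduce:
  fixes V :: "'v set" and E :: "'e set"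
  assumes mg: "multigraph V E ends" and cu: "cubic V E ends"
    and E: "exa \<in> E" "exb \<in> E" "exc \<in> E" "eaa1 \<in> E" "eaa2 \<in> E"
    and en: "ends exa = {x,a}" "ends exb = {x,b}" "ends exc = {x,c}" "ends eaa1 = {a,a1}" "ends eaa2 = {a,a2}"
    and dx: "distinct [x,a,b,c]" and da: "distinct [a,x,a1,a2]"
    and nx: "\<not> adjacent E ends a b" "\<not> adjacent E ends a c" "\<not> adjacent E ends b c"
    and na: "\<not> adjacent E ends x a1" "\<not> adjacent E ends x a2" "\<not> adjacent E ends a1 a2"
  shows "\<exists>(V'::'v set) (E'::'e set) ends'. multigraph V' E' ends' \<and> cubic V' E' ends' \<and> card V' + 2 = card V
     \<and> ncl V' E' ends' + 2 \<le> ncl V E ends \<and> nu 2 E' ends' + 1 \<le> nu 2 E ends"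
proof -
  have fV: "finite V" and fE: "finite E" using mg by (auto simp: multigraph_def)
  have xV: "x \<in> V" and aV: "a \<in> V" and bV: "b \<in> V" and cV: "c \<in> V" and a1V: "a1 \<in> V" and a2V: "a2 \<in> V"
    using mg_inV[OF mg] E en by auto
  have ba: "b \<noteq> a1" "b \<noteq> a2" "c \<noteq> a1" "c \<noteq> a2"
    using nx adjI[of eaa1 E ends a a1] adjI[of eaa2 E ends a a2] E en by auto
  have d5: "distinct [exa,exb,exc,eaa1,eaa2]" using en dx da ba by (auto simp: doubleton_eq_iff)
  have Ix: "inc E ends x = {exa,exb,exc}"
    by (rule cubic_inc_eq[OF mg cu xV]) (use E en d5 in \<open>simp_all add: inc_def\<close>)
  have Ia: "inc E ends a = {exa,eaa1,eaa2}"
    by (rule cubic_inc_eq[OF mg cu aV]) (use E en d5 in \<open>simp_all add: inc_def\<close>)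
  have notx: "\<And>e. e \<in> E \<Longrightarrow> e \<notin> {exa,exb,exc} \<Longrightarrow> x \<notin> ends e" using Ix in_inc by fastforce
  have nota: "\<And>e. e \<in> E \<Longrightarrow> e \<notin> {exa,eaa1,eaa2} \<Longrightarrow> a \<notin> ends e" using Ia in_inc by fastforce
  have clx: "claw_at V E ends x"
    by (rule claw_atI[OF xV aV bV cV dx E(1) en(1) E(2) en(2) E(3) en(3) nx])
  have cla: "claw_at V E ends a"
  proof (rule claw_atI[OF aV xV a1V a2V da E(1) _ E(4) en(4) E(5) en(5) na])
    show "ends exa = {a,x}" using en by (simp add: insert_commute)
  qed
  define V' where "V' = V - {x,a}"
  define E' where "E' = E - {exa,eaa1,eaa2}"
  define ends' where "ends' = ends(exb := {b,a1}, exc := {c,a2})"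
  have e'b: "ends' exb = {b,a1}" and e'c: "ends' exc = {c,a2}" unfolding ends'_def using d5 by auto
  have e'o: "\<And>e. e \<noteq> exb \<Longrightarrow> e \<noteq> exc \<Longrightarrow> ends' e = ends e" unfolding ends'_def by auto
  have E'm: "\<And>e. e \<in> E' \<longleftrightarrow> e \<in> E \<and> e \<noteq> exa \<and> e \<noteq> eaa1 \<and> e \<noteq> eaa2" unfolding E'_def by auto
  have mg': "multigraph V' E' ends'"
    unfolding multigraph_def
  proof (intro conjI)
    show "finite V'" "finite E'" using fV fE unfolding V'_def E'_def by auto
    show "\<forall>e\<in>E'. ends' e \<subseteq> V' \<and> card (ends' e) = 2"
    proof
      fix e assume e: "e \<in> E'"
      show "ends' e \<subseteq> V' \<and> card (ends' e) = 2"
      proof (cases "e = exb \<or> e = exc")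
        case True
        hence "ends' e = {b,a1} \<or> ends' e = {c,a2}" using e'b e'c by auto
        moreover have "{b,a1} \<subseteq> V'" "{c,a2} \<subseteq> V'" using bV cV a1V a2V dx da unfolding V'_def by auto
        moreover have "card {b,a1} = 2" "card {c,a2} = 2" using ba by auto
        ultimately show ?thesis by auto
      next
        case False
        have eE: "e \<in> E" "e \<noteq> exa" "e \<noteq> eaa1" "e \<noteq> eaa2" using e E'm by auto
        hence "x \<notin> ends e" "a \<notin> ends e" using notx nota False by auto
        moreover have "ends' e = ends e" using e'o False by auto
        moreover have "ends e \<subseteq> V" "card (ends e) = 2" using mg eE(1) unfolding multigraph_def by auto
        ultimately show ?thesis unfolding V'_def by auto
      qed
    qed
  qed
  have inc1: "{e\<in>E'. a1 \<in> ends' e} = insert exb ({e\<in>E. a1 \<in> ends e} - {eaa1})"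
  proof -
    have "e \<in> E' \<and> a1 \<in> ends' e \<longleftrightarrow> e \<in> insert exb ({e\<in>E. a1 \<in> ends e} - {eaa1})" for e
    proof (cases "e = exb \<or> e = exc \<or> e = exa \<or> e = eaa1 \<or> e = eaa2")
      case True thus ?thesis using e'b e'c E'm E d5 en dx da ba by auto
    next
      case False thus ?thesis using e'o E'm by auto
    qed
    thus ?thesis by blast
  qed
  have inc2: "{e\<in>E'. a2 \<in> ends' e} = insert exc ({e\<in>E. a2 \<in> ends e} - {eaa2})"
  proof -
    have "e \<in> E' \<and> a2 \<in> ends' e \<longleftrightarrow> e \<in> insert exc ({e\<in>E. a2 \<in> ends e} - {eaa2})" for e
    proof (cases "e = exb \<or> e = exc \<or> e = exa \<or> e = eaa1 \<or> e = eaa2")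
      case True thus ?thesis using e'b e'c E'm E d5 en dx da ba by auto
    next
      case False thus ?thesis using e'o E'm by auto
    qed
    thus ?thesis by blast
  qed
  have incy: "{e\<in>E'. y \<in> ends' e} = {e\<in>E. y \<in> ends e}" if "y \<in> V'" "y \<noteq> a1" "y \<noteq> a2" for y
  proof -
    have yxa: "y \<noteq> x" "y \<noteq> a" using that unfolding V'_def by auto
    have "e \<in> E' \<and> y \<in> ends' e \<longleftrightarrow> e \<in> E \<and> y \<in> ends e" for e
    proof (cases "e = exb \<or> e = exc \<or> e = exa \<or> e = eaa1 \<or> e = eaa2")
      case True thus ?thesis using e'b e'c E'm E d5 en yxa that(2,3) by auto
    next
      case False thus ?thesis using e'o E'm by auto
    qed
    thus ?thesis by blast
  qed
  have cu': "cubic V' E' ends'"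
    unfolding cubic_def degree_def
  proof
    fix y assume y: "y \<in> V'"
    have yV: "y \<in> V" using y unfolding V'_def by auto
    have d3: "card {e\<in>E. y \<in> ends e} = 3" using cu yV unfolding cubic_def degree_def by auto
    have fy: "finite {e\<in>E. y \<in> ends e}" using fE by auto
    show "card {e\<in>E'. y \<in> ends' e} = 3"
    proof (cases "y = a1")
      case True
      have "eaa1 \<in> {e\<in>E. a1 \<in> ends e}" "exb \<notin> {e\<in>E. a1 \<in> ends e}" using E en da ba by auto
      thus ?thesis using True inc1 d3 card_swap fy by metis
    next
      case F1: False
      show ?thesis
      proof (cases "y = a2")
        case True
        have "eaa2 \<in> {e\<in>E. a2 \<in> ends e}" "exc \<notin> {e\<in>E. a2 \<in> ends e}" using E en da ba by auto
        thus ?thesis using True inc2 d3 card_swap fy by metis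
      next
        case False thus ?thesis using incy[OF y F1] d3 by simp
      qed
    qed
  qed
  have card: "card V' + 2 = card V" unfolding V'_def using card_diff_add[OF fV, of "{x,a}"] xV aV dx by simp
  have nbx: "\<And>e s. e \<in> E \<Longrightarrow> ends e = {x,s} \<Longrightarrow> (e = exa \<and> s = a) \<or> (e = exb \<and> s = b) \<or> (e = exc \<and> s = c)"
  proof -
    fix e s assume h: "e \<in> E" "ends e = {x,s}"
    have "x \<in> ends e" using h by simp
    hence "e \<in> {exa,exb,exc}" using in_inc[OF h(1) _ Ix] by simp
    hence "e = exa \<or> e = exb \<or> e = exc" by simp
    thus "(e = exa \<and> s = a) \<or> (e = exb \<and> s = b) \<or> (e = exc \<and> s = c)"
    proof (elim disjE)
      assume "e = exa" thus ?thesis using h(2) en(1) dx by (auto simp add: doubleton_eq_iff)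
    next
      assume "e = exb" thus ?thesis using h(2) en(2) dx by (auto simp add: doubleton_eq_iff)
    next
      assume "e = exc" thus ?thesis using h(2) en(3) dx by (auto simp add: doubleton_eq_iff)
    qed
  qed
  have nba: "\<And>e s. e \<in> E \<Longrightarrow> ends e = {a,s} \<Longrightarrow> (e = exa \<and> s = x) \<or> (e = eaa1 \<and> s = a1) \<or> (e = eaa2 \<and> s = a2)"
  proof -
    fix e s assume h: "e \<in> E" "ends e = {a,s}"
    have "a \<in> ends e" using h by simp
    hence "e \<in> {exa,eaa1,eaa2}" using in_inc[OF h(1) _ Ia] by simp
    hence "e = exa \<or> e = eaa1 \<or> e = eaa2" by simp
    thus "(e = exa \<and> s = x) \<or> (e = eaa1 \<and> s = a1) \<or> (e = eaa2 \<and> s = a2)"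
    proof (elim disjE)
      assume "e = exa" thus ?thesis using h(2) en(1) da by (auto simp add: doubleton_eq_iff)
    next
      assume "e = eaa1" thus ?thesis using h(2) en(4) da by (auto simp add: doubleton_eq_iff)
    next
      assume "e = eaa2" thus ?thesis using h(2) en(5) da by (auto simp add: doubleton_eq_iff)
    qed
  qed
  have clawsub: "{y\<in>V'. claw_at V' E' ends' y} \<subseteq> {y\<in>V. claw_at V E ends y} - {x,a}"
  proof
    fix y assume "y \<in> {y\<in>V'. claw_at V' E' ends' y}"
    hence yV': "y \<in> V'" and c': "claw_at V' E' ends' y" by auto
    have yxa: "y \<notin> {x,a}" and yV: "y \<in> V" using yV' unfolding V'_def by auto
    have "claw_at V E ends y"
    proof (rule ccontr)
      assume "\<not> claw_at V E ends y"
      hence w: "witness E ends y" using noclaw_witness[OF mg cu yV] by auto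
      have "witness E' ends' y"
      proof (rule witness_avoid[OF w yxa])
        fix e1 e2 r s assume h: "e1 \<in> E" "e2 \<in> E" "e1 \<noteq> e2" "ends e1 = {y, r}" "ends e2 = {y, s}"
          "r = s \<or> adjacent E ends r s"
        have ry: "r \<noteq> y" "s \<noteq> y" using mg_ne[OF mg h(1,4)] mg_ne[OF mg h(2,5)] by auto
        have gen: "r' \<notin> {x,a}" if g: "f1 \<in> E" "f2 \<in> E" "f1 \<noteq> f2" "ends f1 = {y, r'}" "ends f2 = {y, s'}"
          "r' = s' \<or> adjacent E ends r' s'" "s' \<noteq> y" for f1 f2 r' s'
        proof
          assume "r' \<in> {x,a}"
          moreover
          { assume rx: "r' = x"
            hence "ends f1 = {x,y}" using g(4) by (simp add: insert_commute)
            hence yabc: "y = b \<or> y = c" using nbx[OF g(1)] yxa by blast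
            have False
            proof (cases "r' = s'")
              case True
              hence "ends f2 = {x,y}" using g(5) rx by (simp add: insert_commute)
              hence "(f2 = exa \<and> y = a) \<or> (f2 = exb \<and> y = b) \<or> (f2 = exc \<and> y = c)" using nbx[OF g(2)] by blast
              moreover have "(f1 = exa \<and> y = a) \<or> (f1 = exb \<and> y = b) \<or> (f1 = exc \<and> y = c)"
                using nbx[OF g(1)] \<open>ends f1 = {x,y}\<close> by blast
              ultimately show False using g(3) dx by auto
            next
              case False
              then obtain f where f: "f \<in> E" "ends f = {x,s'}" using g(6) rx by (auto elim: adjE)
              hence "s' = a \<or> s' = b \<or> s' = c" using nbx by meson
              moreover have "adjacent E ends y s'" using adjI[of f2 E ends y s'] g by auto
              ultimately show False using yabc nx g(7) adjacent_sym[of E ends] by auto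
            qed }
          moreover
          { assume ra: "r' = a"
            hence "ends f1 = {a,y}" using g(4) by (simp add: insert_commute)
            hence ya: "y = a1 \<or> y = a2" using nba[OF g(1)] yxa by blast
            have False
            proof (cases "r' = s'")
              case True
              hence "ends f2 = {a,y}" using g(5) ra by (simp add: insert_commute)
              hence "(f2 = exa \<and> y = x) \<or> (f2 = eaa1 \<and> y = a1) \<or> (f2 = eaa2 \<and> y = a2)" using nba[OF g(2)] by blast
              moreover have "(f1 = exa \<and> y = x) \<or> (f1 = eaa1 \<and> y = a1) \<or> (f1 = eaa2 \<and> y = a2)"
                using nba[OF g(1)] \<open>ends f1 = {a,y}\<close> by blast
              ultimately show False using g(3) da by auto
            next
              case False
              then obtain f where f: "f \<in> E" "ends f = {a,s'}" using g(6) ra by (auto elim: adjE)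
              hence "s' = x \<or> s' = a1 \<or> s' = a2" using nba by meson
              moreover have "adjacent E ends y s'" using adjI[of f2 E ends y s'] g by auto
              ultimately show False using ya na g(7) adjacent_sym[of E ends] by auto
            qed }
          ultimately show False by auto
        qed
        have "r \<notin> {x,a}" using gen[OF h(1-6) ry(2)] .
        moreover have "s \<notin> {x,a}" using gen[OF h(2) h(1) h(3)[symmetric] h(5) h(4) _ ry(1)] h(6)
          adjacent_sym[of E ends] by auto
        ultimately show "r \<notin> {x,a} \<and> s \<notin> {x,a}" by simp
      next
        fix e assume e: "e \<in> E" "ends e \<inter> {x,a} = {}"
        hence "e \<noteq> exa" "e \<noteq> exb" "e \<noteq> exc" "e \<noteq> eaa1" "e \<noteq> eaa2" using en by auto
        thus "e \<in> E' \<and> ends' e = ends e" using e E'm e'o by auto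
      qed
      thus False using witness_noclaw[OF mg' cu'] c' by blast
    qed
    thus "y \<in> {y\<in>V. claw_at V E ends y} - {x,a}" using yV yxa by auto
  qed
  have ncl: "ncl V' E' ends' + 2 \<le> ncl V E ends"
  proof -
    have "card {y\<in>V'. claw_at V' E' ends' y} + card {x,a} \<le> card {y\<in>V. claw_at V E ends y} + card ({}::'v set)"
      by (rule card_claw_bound) (use clawsub clx cla xV aV fV in auto)
    thus ?thesis unfolding ncl_def using dx by simp
  qed
  have nu: "nu 2 E' ends' + 1 \<le> nu 2 E ends"
  proof (rule nu_step[OF fE])
    show "finite E'" using fE unfolding E'_def by auto
    fix F' col' assume F': "F' \<subseteq> E'" and p': "proper ends' F' col'"
    have F'2: "F' \<subseteq> E - {exa, eaa1, eaa2}" using F' unfolding E'_def .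
    show "\<exists>F col. F \<subseteq> E \<and> proper ends F col \<and> card F' + 1 \<le> card F"
    proof (cases "exb \<in> F'")
      case True
      show ?thesis
        by (rule cc_ext[OF F'2 p' fE True E(1) E(4) e'b e'o en(1) en(2) en(4) Ix Ia])
           (use d5 dx da ba in auto)
    next
      case F1: False
      show ?thesis
      proof (cases "exc \<in> F'")
        case True
        have F'3: "F' \<subseteq> E - {exa, eaa2, eaa1}" using F'2 by auto
        have Ix': "inc E ends x = {exa,exc,exb}" using Ix by auto
        have Ia': "inc E ends a = {exa,eaa2,eaa1}" using Ia by auto
        show ?thesis
          by (rule cc_ext[OF F'3 p' fE True E(1) E(5) e'c _ en(1) en(3) en(5) Ix' Ia'])
             (use d5 dx da ba e'o in auto)
      next
        case False
        define F where "F = F' \<union> {exa}"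
        define col where "col = col'(exa := 0)"
        have F'E: "F' \<subseteq> E" using F' unfolding E'_def by auto
        have fF': "finite F'" using F'E fE by (auto intro: finite_subset)
        have nF': "exa \<notin> F'" "eaa1 \<notin> F'" "eaa2 \<notin> F'" using F' E'm by auto
        have "card F = card F' + 1" unfolding F_def using fF' nF' by simp
        moreover have "F \<subseteq> E" unfolding F_def using F'E E by auto
        moreover have "proper ends F col"
        proof (rule proper_intro_local)
          fix e assume "e \<in> F" thus "col e < 2" using proper_lt2[OF p'] unfolding F_def col_def by auto
        next
          fix z e1 e2 assume e: "e1 \<in> F" "e2 \<in> F" "e1 \<noteq> e2" "z \<in> ends e1" "z \<in> ends e2"
          have atxa: "\<And>e. e \<in> F \<Longrightarrow> (x \<in> ends e \<or> a \<in> ends e) \<Longrightarrow> e = exa"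
          proof -
            fix e assume h: "e \<in> F" "x \<in> ends e \<or> a \<in> ends e"
            have "e \<in> E" using h F'E E unfolding F_def by auto
            hence "e \<in> {exa,exb,exc} \<or> e \<in> {exa,eaa1,eaa2}" using h notx nota by blast
            thus "e = exa" using h nF' F1 False unfolding F_def by auto
          qed
          show "col e1 \<noteq> col e2"
          proof (cases "z = x \<or> z = a")
            case True thus ?thesis using atxa e by metis
          next
            case zn: False
            show ?thesis
            proof (rule pat_transfer[OF p' e(1,2,4,5), where \<phi> = id])
              fix e assume h: "e \<in> F" "z \<in> ends e"
              have "e \<noteq> exa" using h en zn by auto
              hence "e \<in> F'" "e \<noteq> exb" "e \<noteq> exc" using h F1 False unfolding F_def by auto
              thus "id e \<in> F' \<and> z \<in> ends' (id e) \<and> col' (id e) = col e"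
                using h e'o \<open>e \<noteq> exa\<close> unfolding col_def by auto
            next
              show "id e1 \<noteq> id e2" using e by simp
            qed
          qed
        qed
        ultimately show ?thesis by (intro exI[of _ F] exI[of _ col]) simp
      qed
    qed
  qed
  show ?thesis using mg' cu' card ncl nu by blast
qed


lemma nb3:
  assumes I: "inc E ends x = {e1,e2,e3}" and en: "ends e1 = {x,t1}" "ends e2 = {x,t2}" "ends e3 = {x,t3}"
    and d: "x \<noteq> t1" "x \<noteq> t2" "x \<noteq> t3"
    and e: "e \<in> E" "ends e = {x,s}"
  shows "(e = e1 \<and> s = t1) \<or> (e = e2 \<and> s = t2) \<or> (e = e3 \<and> s = t3)"
proof -
  have "x \<in> ends e" using e by simp
  hence "e \<in> {e1,e2,e3}" using in_inc[OF e(1) _ I] by simp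
  hence "e = e1 \<or> e = e2 \<or> e = e3" by simp
  thus ?thesis
  proof (elim disjE)
    assume "e = e1" thus ?thesis using e(2) en(1) d by (auto simp add: doubleton_eq_iff)
  next
    assume "e = e2" thus ?thesis using e(2) en(2) d by (auto simp add: doubleton_eq_iff)
  next
    assume "e = e3" thus ?thesis using e(2) en(3) d by (auto simp add: doubleton_eq_iff)
  qed
qed

lemma cl_reduce:
  fixes V :: "'v set" and E :: "'e set"
  assumes mg: "multigraph V E ends" and cu: "cubic V E ends"
    and E: "exw \<in> E" "exb \<in> E" "exc \<in> E" "ewu \<in> E" "ewv \<in> E" "p \<in> E" "q \<in> E"
    and en: "ends exw = {x,w}" "ends exb = {x,b}" "ends exc = {x,c}" "ends ewu = {w,u}" "ends ewv = {w,v}"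
      "ends p = {u,v}" "ends q = {u,v}"
    and pq: "p \<noteq> q" and dv: "distinct [x,w,b,c,u,v]"
    and nx: "\<not> adjacent E ends w b" "\<not> adjacent E ends w c" "\<not> adjacent E ends b c"
  shows "\<exists>(V'::'v set) (E'::'e set) ends'. multigraph V' E' ends' \<and> cubic V' E' ends' \<and> card V' + 4 = card V
     \<and> ncl V' E' ends' + 1 \<le> ncl V E ends \<and> nu 2 E' ends' + 3 \<le> nu 2 E ends"
proof -
  have fV: "finite V" and fE: "finite E" using mg by (auto simp: multigraph_def)
  have xV: "x \<in> V" and wV: "w \<in> V" and bV: "b \<in> V" and cV: "c \<in> V" and uV: "u \<in> V" and vV: "v \<in> V"
    using mg_inV[OF mg] E en by auto
  have d7: "distinct [exw,exb,exc,ewu,ewv,p,q]" using en dv pq by (auto simp: doubleton_eq_iff)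
  have Ix: "inc E ends x = {exw,exb,exc}"
    by (rule cubic_inc_eq[OF mg cu xV]) (use E en d7 in \<open>simp_all add: inc_def\<close>)
  have Iw: "inc E ends w = {exw,ewu,ewv}"
    by (rule cubic_inc_eq[OF mg cu wV]) (use E en d7 in \<open>simp_all add: inc_def\<close>)
  have Iu: "inc E ends u = {ewu,p,q}"
    by (rule cubic_inc_eq[OF mg cu uV]) (use E en d7 in \<open>simp_all add: inc_def\<close>)
  have Iv: "inc E ends v = {ewv,p,q}"
    by (rule cubic_inc_eq[OF mg cu vV]) (use E en d7 in \<open>simp_all add: inc_def\<close>)
  have en': "ends exw = {w,x}" "ends ewu = {u,w}" "ends ewv = {v,w}" "ends p = {v,u}" "ends q = {v,u}"
    using en by (simp_all add: insert_commute)
  have dv': "x \<noteq> w" "x \<noteq> b" "x \<noteq> c" "w \<noteq> x" "w \<noteq> u" "w \<noteq> v" "u \<noteq> w" "u \<noteq> v" "v \<noteq> w" "v \<noteq> u"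
    using dv by auto
  have nbx: "\<And>e s. e \<in> E \<Longrightarrow> ends e = {x,s} \<Longrightarrow> (e = exw \<and> s = w) \<or> (e = exb \<and> s = b) \<or> (e = exc \<and> s = c)"
    by (rule nb3[OF Ix en(1-3)]) (use dv in auto)
  have nbw: "\<And>e s. e \<in> E \<Longrightarrow> ends e = {w,s} \<Longrightarrow> (e = exw \<and> s = x) \<or> (e = ewu \<and> s = u) \<or> (e = ewv \<and> s = v)"
    by (rule nb3[OF Iw en'(1) en(4) en(5)]) (use dv in auto)
  have nbu: "\<And>e s. e \<in> E \<Longrightarrow> ends e = {u,s} \<Longrightarrow> (e = ewu \<and> s = w) \<or> (e = p \<and> s = v) \<or> (e = q \<and> s = v)"
    by (rule nb3[OF Iu en'(2) en(6) en(7)]) (use dv in auto)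
  have nbv: "\<And>e s. e \<in> E \<Longrightarrow> ends e = {v,s} \<Longrightarrow> (e = ewv \<and> s = w) \<or> (e = p \<and> s = u) \<or> (e = q \<and> s = u)"
    by (rule nb3[OF Iv en'(3) en'(4) en'(5)]) (use dv in auto)
  have notS: "\<And>e. e \<in> E \<Longrightarrow> e \<notin> {exw,exb,exc,ewu,ewv,p,q} \<Longrightarrow> x \<notin> ends e \<and> w \<notin> ends e \<and> u \<notin> ends e \<and> v \<notin> ends e"
    using Ix Iw Iu Iv in_inc by fastforce
  have clx: "claw_at V E ends x"
    by (rule claw_atI[OF xV wV bV cV _ E(1) en(1) E(2) en(2) E(3) en(3) nx]) (use dv in auto)
  define V' where "V' = V - {x,w,u,v}"
  define E' where "E' = E - {exw,exc,ewu,ewv,p,q}"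
  define ends' where "ends' = ends(exb := {b,c})"
  have e'b: "ends' exb = {b,c}" unfolding ends'_def by auto
  have e'o: "\<And>e. e \<noteq> exb \<Longrightarrow> ends' e = ends e" unfolding ends'_def by auto
  have E'm: "\<And>e. e \<in> E' \<longleftrightarrow> e \<in> E \<and> e \<notin> {exw,exc,ewu,ewv,p,q}" unfolding E'_def by auto
  have mg': "multigraph V' E' ends'"
    unfolding multigraph_def
  proof (intro conjI)
    show "finite V'" "finite E'" using fV fE unfolding V'_def E'_def by auto
    show "\<forall>e\<in>E'. ends' e \<subseteq> V' \<and> card (ends' e) = 2"
    proof
      fix e assume e: "e \<in> E'"
      show "ends' e \<subseteq> V' \<and> card (ends' e) = 2"
      proof (cases "e = exb")
        case True
        moreover have "{b,c} \<subseteq> V'" using bV cV dv unfolding V'_def by auto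
        moreover have "card {b,c} = 2" using dv by auto
        ultimately show ?thesis using e'b by auto
      next
        case False
        have eE: "e \<in> E" "e \<notin> {exw,exc,ewu,ewv,p,q}" using e E'm by auto
        hence "x \<notin> ends e \<and> w \<notin> ends e \<and> u \<notin> ends e \<and> v \<notin> ends e" using notS False by auto
        moreover have "ends' e = ends e" using e'o False by auto
        moreover have "ends e \<subseteq> V" "card (ends e) = 2" using mg eE(1) unfolding multigraph_def by auto
        ultimately show ?thesis unfolding V'_def by auto
      qed
    qed
  qed
  have incc: "{e\<in>E'. c \<in> ends' e} = insert exb ({e\<in>E. c \<in> ends e} - {exc})"
  proof -
    have "e \<in> E' \<and> c \<in> ends' e \<longleftrightarrow> e \<in> insert exb ({e\<in>E. c \<in> ends e} - {exc})" for e
    proof (cases "e \<in> {exw,exb,exc,ewu,ewv,p,q}")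
      case True thus ?thesis using e'b e'o E'm E d7 en dv by auto
    next
      case False thus ?thesis using e'o E'm by auto
    qed
    thus ?thesis by blast
  qed
  have incy: "{e\<in>E'. y \<in> ends' e} = {e\<in>E. y \<in> ends e}" if "y \<in> V'" "y \<noteq> c" for y
  proof -
    have yS: "y \<noteq> x" "y \<noteq> w" "y \<noteq> u" "y \<noteq> v" using that unfolding V'_def by auto
    have "e \<in> E' \<and> y \<in> ends' e \<longleftrightarrow> e \<in> E \<and> y \<in> ends e" for e
    proof (cases "e \<in> {exw,exb,exc,ewu,ewv,p,q}")
      case True thus ?thesis using e'b e'o E'm E d7 en yS that(2) by auto
    next
      case False thus ?thesis using e'o E'm by auto
    qed
    thus ?thesis by blast
  qed
  have cu': "cubic V' E' ends'"
    unfolding cubic_def degree_def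
  proof
    fix y assume y: "y \<in> V'"
    have yV: "y \<in> V" using y unfolding V'_def by auto
    have d3: "card {e\<in>E. y \<in> ends e} = 3" using cu yV unfolding cubic_def degree_def by auto
    have fy: "finite {e\<in>E. y \<in> ends e}" using fE by auto
    show "card {e\<in>E'. y \<in> ends' e} = 3"
    proof (cases "y = c")
      case True
      have "exc \<in> {e\<in>E. c \<in> ends e}" "exb \<notin> {e\<in>E. c \<in> ends e}" using E en dv by auto
      thus ?thesis using True incc d3 card_swap fy by metis
    next
      case False thus ?thesis using incy[OF y False] d3 by simp
    qed
  qed
  have card: "card V' + 4 = card V" unfolding V'_def using card_diff_add[OF fV, of "{x,w,u,v}"] xV wV uV vV dv
    by simp
  have clawsub: "{y\<in>V'. claw_at V' E' ends' y} \<subseteq> {y\<in>V. claw_at V E ends y} - {x}"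
  proof
    fix y assume "y \<in> {y\<in>V'. claw_at V' E' ends' y}"
    hence yV': "y \<in> V'" and c': "claw_at V' E' ends' y" by auto
    have yS: "y \<notin> {x,w,u,v}" and yV: "y \<in> V" using yV' unfolding V'_def by auto
    have "claw_at V E ends y"
    proof (rule ccontr)
      assume "\<not> claw_at V E ends y"
      hence w: "witness E ends y" using noclaw_witness[OF mg cu yV] by auto
      have "witness E' ends' y"
      proof (rule witness_avoid[OF w yS])
        fix e1 e2 r s assume h: "e1 \<in> E" "e2 \<in> E" "e1 \<noteq> e2" "ends e1 = {y, r}" "ends e2 = {y, s}"
          "r = s \<or> adjacent E ends r s"
        have ry: "r \<noteq> y" "s \<noteq> y" using mg_ne[OF mg h(1,4)] mg_ne[OF mg h(2,5)] by auto
        have gen: "r' \<notin> {x,w,u,v}" if g: "f1 \<in> E" "f2 \<in> E" "f1 \<noteq> f2" "ends f1 = {y, r'}" "ends f2 = {y, s'}"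
          "r' = s' \<or> adjacent E ends r' s'" "s' \<noteq> y" for f1 f2 r' s'
        proof
          assume "r' \<in> {x,w,u,v}"
          moreover
          { assume rx: "r' = x"
            hence "ends f1 = {x,y}" using g(4) by (simp add: insert_commute)
            hence yabc: "y = b \<or> y = c" using nbx[OF g(1)] yS by blast
            have False
            proof (cases "r' = s'")
              case True
              hence "ends f2 = {x,y}" using g(5) rx by (simp add: insert_commute)
              hence "(f2 = exw \<and> y = w) \<or> (f2 = exb \<and> y = b) \<or> (f2 = exc \<and> y = c)" using nbx[OF g(2)] by blast
              moreover have "(f1 = exw \<and> y = w) \<or> (f1 = exb \<and> y = b) \<or> (f1 = exc \<and> y = c)"
                using nbx[OF g(1)] \<open>ends f1 = {x,y}\<close> by blast
              ultimately show False using g(3) dv by auto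
            next
              case False
              then obtain f where f: "f \<in> E" "ends f = {x,s'}" using g(6) rx by (auto elim: adjE)
              hence "s' = w \<or> s' = b \<or> s' = c" using nbx by meson
              moreover have "adjacent E ends y s'" using adjI[of f2 E ends y s'] g by auto
              ultimately show False using yabc nx g(7) adjacent_sym[of E ends] by auto
            qed }
          moreover
          { assume "r' = w"
            hence "ends f1 = {w,y}" using g(4) by (simp add: insert_commute)
            hence False using nbw[OF g(1)] yS by blast }
          moreover
          { assume "r' = u"
            hence "ends f1 = {u,y}" using g(4) by (simp add: insert_commute)
            hence False using nbu[OF g(1)] yS by blast }
          moreover
          { assume "r' = v"
            hence "ends f1 = {v,y}" using g(4) by (simp add: insert_commute)
            hence False using nbv[OF g(1)] yS by blast }
          ultimately show False by blast
        qed
        have "r \<notin> {x,w,u,v}" using gen[OF h(1-6) ry(2)] .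
        moreover have "s \<notin> {x,w,u,v}" using gen[OF h(2) h(1) h(3)[symmetric] h(5) h(4) _ ry(1)] h(6)
          adjacent_sym[of E ends] by auto
        ultimately show "r \<notin> {x,w,u,v} \<and> s \<notin> {x,w,u,v}" by simp
      next
        fix e assume e: "e \<in> E" "ends e \<inter> {x,w,u,v} = {}"
        hence "e \<notin> {exw,exb,exc,ewu,ewv,p,q}" using en by auto
        thus "e \<in> E' \<and> ends' e = ends e" using e E'm e'o by auto
      qed
      thus False using witness_noclaw[OF mg' cu'] c' by blast
    qed
    thus "y \<in> {y\<in>V. claw_at V E ends y} - {x}" using yV yS by auto
  qed
  have ncl: "ncl V' E' ends' + 1 \<le> ncl V E ends"
  proof -
    have "card {y\<in>V'. claw_at V' E' ends' y} + card {x} \<le> card {y\<in>V. claw_at V E ends y} + card ({}::'v set)"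
      by (rule card_claw_bound) (use clawsub clx xV fV in auto)
    thus ?thesis unfolding ncl_def by simp
  qed
  have nu: "nu 2 E' ends' + 3 \<le> nu 2 E ends"
  proof (rule nu_step[OF fE])
    show "finite E'" using fE unfolding E'_def by auto
    fix F' col' assume F': "F' \<subseteq> E'" and p': "proper ends' F' col'"
    define \<beta> where "\<beta> = (if exb \<in> F' then col' exb else 0)"
    have \<beta>: "\<beta> < 2" unfolding \<beta>_def using proper_lt2[OF p'] by auto
    define F where "F = F' \<union> {exw, ewu, p}"
    define col where "col = col'(exw := 1 - \<beta>, ewu := \<beta>, p := 1 - \<beta>)"
    have F'E: "F' \<subseteq> E" using F' unfolding E'_def by auto
    have fF': "finite F'" using F'E fE by (auto intro: finite_subset)
    have nF': "exw \<notin> F'" "exc \<notin> F'" "ewu \<notin> F'" "ewv \<notin> F'" "p \<notin> F'" "q \<notin> F'" using F' E'm by auto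
    have "card F = card F' + 3" unfolding F_def using fF' nF' d7 by (simp add: card_insert_if)
    moreover have FE: "F \<subseteq> E" unfolding F_def using F'E E by auto
    moreover have "proper ends F col"
    proof (rule proper_intro_local)
      fix e assume "e \<in> F" thus "col e < 2" using proper_lt2[OF p'] \<beta> unfolding F_def col_def by auto
    next
      fix z e1 e2 assume e: "e1 \<in> F" "e2 \<in> F" "e1 \<noteq> e2" "z \<in> ends e1" "z \<in> ends e2"
      have cl: "col exw = 1 - \<beta>" "col ewu = \<beta>" "col p = 1 - \<beta>" "exb \<in> F' \<Longrightarrow> col exb = \<beta>"
        unfolding col_def \<beta>_def using d7 by auto
      have b2: "1 - \<beta> \<noteq> \<beta>" using \<beta> by arith
      have nF: "exc \<notin> F" "ewv \<notin> F" "q \<notin> F" unfolding F_def using nF' d7 by auto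
      have atS: "\<And>e t. e \<in> F \<Longrightarrow> t \<in> ends e \<Longrightarrow> t \<in> {x,w,u,v} \<Longrightarrow> e \<in> {exw,exb,exc,ewu,ewv,p,q}"
        using notS FE by blast
      show "col e1 \<noteq> col e2"
      proof (cases "z \<in> {x,w,u,v}")
        case True
        have "e1 \<in> {exw,exb,exc,ewu,ewv,p,q}" "e2 \<in> {exw,exb,exc,ewu,ewv,p,q}" using atS e True by auto
        hence "e1 \<in> {exw,exb,ewu,p}" "e2 \<in> {exw,exb,ewu,p}" using nF e by auto
        moreover have "exb \<in> F \<Longrightarrow> exb \<in> F'" unfolding F_def using d7 by auto
        ultimately have cc: "col e1 = (if e1 = exw \<or> e1 = p then 1 - \<beta> else \<beta>)"
          "col e2 = (if e2 = exw \<or> e2 = p then 1 - \<beta> else \<beta>)" using cl e(1,2) by auto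
        have dj: "ends exw \<inter> ends p = {}" "ends exb \<inter> ends ewu = {}" using en dv by auto
        have "\<not> ({e1,e2} = {exw,p})" "\<not> ({e1,e2} = {exb,ewu})" using dj e(4,5) by (auto simp: doubleton_eq_iff)
        hence "(e1 = exw \<or> e1 = p) \<noteq> (e2 = exw \<or> e2 = p)"
          using \<open>e1 \<in> {exw,exb,ewu,p}\<close> \<open>e2 \<in> {exw,exb,ewu,p}\<close> e(3) by auto
        thus ?thesis using cc b2 by auto
      next
        case zn: False
        show ?thesis
        proof (rule pat_transfer[OF p' e(1,2,4,5), where \<phi> = id])
          fix e assume h: "e \<in> F" "z \<in> ends e"
          have "e \<notin> {exw, ewu, p}" using h en zn by auto
          hence "e \<in> F'" using h unfolding F_def by auto
          moreover have "z \<in> ends' e" using h e'b e'o en zn by (cases "e = exb") auto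
          ultimately show "id e \<in> F' \<and> z \<in> ends' (id e) \<and> col' (id e) = col e"
            using \<open>e \<notin> {exw, ewu, p}\<close> unfolding col_def by auto
        next
          show "id e1 \<noteq> id e2" using e by simp
        qed
      qed
    qed
    ultimately show "\<exists>F col. F \<subseteq> E \<and> proper ends F col \<and> card F' + 3 \<le> card F"
      by (intro exI[of _ F] exI[of _ col]) simp
  qed
  show ?thesis using mg' cu' card ncl nu by blast
qed


definition Good :: "'v set \<Rightarrow> 'e set \<Rightarrow> ('e \<Rightarrow> 'v set) \<Rightarrow> bool" where
  "Good V E ends \<longleftrightarrow> (\<exists>(V'::'v set) (E'::'e set) ends'. multigraph V' E' ends' \<and> cubic V' E' ends'
     \<and> card V' < card V \<and> (5 * card V' \<le> 6 * nu 2 E' ends' + 2 * ncl V' E' ends' \<longrightarrow>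
        5 * card V \<le> 6 * nu 2 E ends + 2 * ncl V E ends))"

lemma GoodI:
  fixes V :: "'v set" and E :: "'e set" and V' :: "'v set" and E' :: "'e set" and ends' :: "'e \<Rightarrow> 'v set"
  assumes "multigraph V' E' ends'" "cubic V' E' ends'" "card V' + k = card V" "0 < k"
    "ncl V' E' ends' + cA \<le> ncl V E ends + cB" "nu 2 E' ends' + g \<le> nu 2 E ends"
    "5 * k + 2 * cB \<le> 6 * g + 2 * cA"
  shows "Good V E (ends :: 'e \<Rightarrow> 'v set)"
  unfolding Good_def
proof (intro exI[of _ V'] exI[of _ E'] exI[of _ ends'] conjI impI)
  show "multigraph V' E' ends'" "cubic V' E' ends'" by fact+
  show "card V' < card V" using assms by simp
  assume "5 * card V' \<le> 6 * nu 2 E' ends' + 2 * ncl V' E' ends'"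
  thus "5 * card V \<le> 6 * nu 2 E ends + 2 * ncl V E ends" using assms by linarith
qed

lemma good_digon:
  fixes V :: "'v set" and E :: "'e set"
  assumes mg: "multigraph V E ends" and cu: "cubic V E ends"
    and uv: "u \<noteq> v" and pq: "p \<noteq> q" and E: "p \<in> E" "q \<in> E" "eu \<in> E" "ev \<in> E"
    and ep: "ends p = {u,v}" and eq: "ends q = {u,v}" and eeu: "ends eu = {u,u'}" and eev: "ends ev = {v,v'}"
    and u': "u' \<noteq> u" "u' \<noteq> v" and v': "v' \<noteq> u" "v' \<noteq> v" and u'v': "u' \<noteq> v'"
  shows "Good V E ends"
proof -
  obtain V' E' ends' where "multigraph V' E' (ends' :: 'e \<Rightarrow> 'v set)" "cubic V' E' ends'" "card (V'::'v set) + 2 = card V"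
     "ncl V' E' ends' \<le> ncl V E ends" "nu 2 (E'::'e set) ends' + 2 \<le> nu 2 E ends"
    using digon_reduce[OF assms] by blast
  thus ?thesis using GoodI[where k=2 and cA=0 and cB=0 and g=2] by simp
qed

lemma good_tri:
  fixes V :: "'v set" and E :: "'e set"
  assumes mg: "multigraph V E ends" and cu: "cubic V E ends"
    and abc: "a \<noteq> b" "b \<noteq> c" "a \<noteq> c"
    and E: "eab \<in> E" "ebc \<in> E" "eca \<in> E" "ea \<in> E" "eb \<in> E" "ec \<in> E"
    and en: "ends eab = {a,b}" "ends ebc = {b,c}" "ends eca = {c,a}"
      "ends ea = {a,a'}" "ends eb = {b,b'}" "ends ec = {c,c'}"
    and a': "a' \<noteq> a" "a' \<noteq> b" "a' \<noteq> c" and b': "b' \<noteq> a" "b' \<noteq> b" "b' \<noteq> c"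
    and c': "c' \<noteq> a" "c' \<noteq> b" "c' \<noteq> c"
  shows "Good V E ends"
proof -
  obtain V' E' ends' where "multigraph V' E' (ends' :: 'e \<Rightarrow> 'v set)" "cubic V' E' ends'" "card (V'::'v set) + 2 = card V"
     "ncl V' E' ends' \<le> ncl V E ends + 1" "nu 2 (E'::'e set) ends' + 2 \<le> nu 2 E ends"
    using tri_reduce[OF assms] by blast
  thus ?thesis using GoodI[where k=2 and cA=0 and cB=1 and g=2] by simp
qed

lemma good_cc:
  fixes V :: "'v set" and E :: "'e set"
  assumes mg: "multigraph V E ends" and cu: "cubic V E ends"
    and E: "exa \<in> E" "exb \<in> E" "exc \<in> E" "eaa1 \<in> E" "eaa2 \<in> E"
    and en: "ends exa = {x,a}" "ends exb = {x,b}" "ends exc = {x,c}" "ends eaa1 = {a,a1}" "ends eaa2 = {a,a2}"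
    and dx: "distinct [x,a,b,c]" and da: "distinct [a,x,a1,a2]"
    and nx: "\<not> adjacent E ends a b" "\<not> adjacent E ends a c" "\<not> adjacent E ends b c"
    and na: "\<not> adjacent E ends x a1" "\<not> adjacent E ends x a2" "\<not> adjacent E ends a1 a2"
  shows "Good V E ends"
proof -
  obtain V' E' ends' where "multigraph V' E' (ends' :: 'e \<Rightarrow> 'v set)" "cubic V' E' ends'" "card (V'::'v set) + 2 = card V"
     "ncl V' E' ends' + 2 \<le> ncl V E ends" "nu 2 (E'::'e set) ends' + 1 \<le> nu 2 E ends"
    using cc_reduce[OF assms] by blast
  thus ?thesis using GoodI[where k=2 and cA=2 and cB=0 and g=1] by simp
qed

lemma good_cl:
  fixes V :: "'v set" and E :: "'e set"
  assumes mg: "multigraph V E ends" and cu: "cubic V E ends"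
    and E: "exw \<in> E" "exb \<in> E" "exc \<in> E" "ewu \<in> E" "ewv \<in> E" "p \<in> E" "q \<in> E"
    and en: "ends exw = {x,w}" "ends exb = {x,b}" "ends exc = {x,c}" "ends ewu = {w,u}" "ends ewv = {w,v}"
      "ends p = {u,v}" "ends q = {u,v}"
    and pq: "p \<noteq> q" and dv: "distinct [x,w,b,c,u,v]"
    and nx: "\<not> adjacent E ends w b" "\<not> adjacent E ends w c" "\<not> adjacent E ends b c"
  shows "Good V E ends"
proof -
  obtain V' E' ends' where "multigraph V' E' (ends' :: 'e \<Rightarrow> 'v set)" "cubic V' E' ends'" "card (V'::'v set) + 4 = card V"
     "ncl V' E' ends' + 1 \<le> ncl V E ends" "nu 2 (E'::'e set) ends' + 3 \<le> nu 2 E ends"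
    using cl_reduce[OF assms] by blast
  thus ?thesis using GoodI[where k=4 and cA=1 and cB=0 and g=3] by simp
qed

lemma good_comp:
  fixes V :: "'v set" and E :: "'e set"
  assumes mg: "multigraph V E ends" and cu: "cubic V E ends" and SV: "S \<subseteq> V"
    and closed: "\<And>e. e \<in> E \<Longrightarrow> ends e \<inter> S \<noteq> {} \<Longrightarrow> ends e \<subseteq> S"
    and NE: "N \<subseteq> E" and NS: "\<And>e. e \<in> N \<Longrightarrow> ends e \<subseteq> S" and pN: "proper ends N colN"
    and ne: "S \<noteq> {}" and ratio: "5 * card S \<le> 6 * card N"
  shows "Good V E ends"
proof -
  obtain V' E' ends' where "multigraph V' E' (ends' :: 'e \<Rightarrow> 'v set)" "cubic V' E' ends'"
     "card (V'::'v set) + card S = card V"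
     "ncl V' E' ends' \<le> ncl V E ends" "nu 2 (E'::'e set) ends' + card N \<le> nu 2 E ends"
    using comp_reduce[OF mg cu SV closed NE NS pN] by blast
  moreover have "0 < card S" using ne SV mg_finV[OF mg] by (meson card_gt_0_iff finite_subset)
  ultimately show ?thesis using GoodI[where k="card S" and cA=0 and cB=0 and g="card N"] ratio by simp
qed


lemma third_edge:
  assumes mg: "multigraph V E ends" and cu: "cubic V E ends" and vV: "v \<in> V"
    and e: "e1 \<in> E" "e2 \<in> E" "v \<in> ends e1" "v \<in> ends e2" "e1 \<noteq> e2"
  obtains e3 where "e3 \<in> E" "v \<in> ends e3" "distinct [e1,e2,e3]" "inc E ends v = {e1,e2,e3}"
proof -
  obtain f1 f2 f3 where d: "distinct [f1,f2,f3]" and I: "inc E ends v = {f1,f2,f3}"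
    using cubic_inc[OF mg cu vV] by blast
  have m: "e1 \<in> {f1,f2,f3}" "e2 \<in> {f1,f2,f3}" using I e unfolding inc_def by auto
  have "\<exists>e3. e3 \<in> {f1,f2,f3} \<and> distinct [e1,e2,e3] \<and> {f1,f2,f3} = {e1,e2,e3}"
    using m d e(5) by auto
  then obtain e3 where e3: "e3 \<in> {f1,f2,f3}" "distinct [e1,e2,e3]" "{f1,f2,f3} = {e1,e2,e3}" by blast
  have "e3 \<in> E" "v \<in> ends e3" using e3(1) I unfolding inc_def by auto
  thus ?thesis using that e3 I by simp
qed

lemma other_end:
  assumes mg: "multigraph V E ends" and "e \<in> E" "v \<in> ends e"
  obtains w where "ends e = {v,w}" "w \<noteq> v" "w \<in> V"
  using mg_other[OF assms] by metis

lemma witness3: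
  assumes mg: "multigraph V E ends" and I: "inc E ends y = {e1,e2,e3}" and d: "distinct [e1,e2,e3]"
    and en: "ends e1 = {y,t1}" "ends e2 = {y,t2}" "ends e3 = {y,t3}"
    and w: "witness E ends y"
  shows "(t1 = t2 \<or> adjacent E ends t1 t2) \<or> (t1 = t3 \<or> adjacent E ends t1 t3) \<or> (t2 = t3 \<or> adjacent E ends t2 t3)"
proof -
  obtain f1 f2 r s where f: "f1 \<in> E" "ends f1 = {y,r}" "f2 \<in> E" "ends f2 = {y,s}" "f1 \<noteq> f2"
     "r = s \<or> adjacent E ends r s" using w by (rule witnessE)
  have E3: "e1 \<in> E" "e2 \<in> E" "e3 \<in> E" using I unfolding inc_def by auto
  have ne: "y \<noteq> t1" "y \<noteq> t2" "y \<noteq> t3" using mg_ne[OF mg E3(1) en(1)] mg_ne[OF mg E3(2) en(2)]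
    mg_ne[OF mg E3(3) en(3)] by auto
  have A: "(f1 = e1 \<and> r = t1) \<or> (f1 = e2 \<and> r = t2) \<or> (f1 = e3 \<and> r = t3)"
    by (rule nb3[OF I en ne f(1,2)])
  have B: "(f2 = e1 \<and> s = t1) \<or> (f2 = e2 \<and> s = t2) \<or> (f2 = e3 \<and> s = t3)"
    by (rule nb3[OF I en ne f(3,4)])
  show ?thesis using A B f(5,6) adjacent_sym[of E ends] by auto
qed

lemma nowitness3:
  assumes I: "inc E ends y = {e1,e2,e3}" and d: "distinct [e1,e2,e3]"
    and en: "ends e1 = {y,t1}" "ends e2 = {y,t2}" "ends e3 = {y,t3}"
    and w: "\<not> witness E ends y"
  shows "t1 \<noteq> t2" "\<not> adjacent E ends t1 t2" "t1 \<noteq> t3" "\<not> adjacent E ends t1 t3"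
    "t2 \<noteq> t3" "\<not> adjacent E ends t2 t3"
proof -
  have E3: "e1 \<in> E" "e2 \<in> E" "e3 \<in> E" using I unfolding inc_def by auto
  have "\<not> (t1 = t2 \<or> adjacent E ends t1 t2)" using witnessI[OF E3(1) en(1) E3(2) en(2)] d w by auto
  moreover have "\<not> (t1 = t3 \<or> adjacent E ends t1 t3)" using witnessI[OF E3(1) en(1) E3(3) en(3)] d w by auto
  moreover have "\<not> (t2 = t3 \<or> adjacent E ends t2 t3)" using witnessI[OF E3(2) en(2) E3(3) en(3)] d w by auto
  ultimately show "t1 \<noteq> t2" "\<not> adjacent E ends t1 t2" "t1 \<noteq> t3" "\<not> adjacent E ends t1 t3"
    "t2 \<noteq> t3" "\<not> adjacent E ends t2 t3" by auto
qed

lemma inc3: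
  assumes mg: "multigraph V E ends" and cu: "cubic V E ends" and vV: "v \<in> V"
    and E: "e1 \<in> E" "e2 \<in> E" "e3 \<in> E" and en: "ends e1 = {v,t1}" "ends e2 = {v,t2}" "ends e3 = {v,t3}"
    and d: "distinct [e1,e2,e3]"
  shows "inc E ends v = {e1,e2,e3}"
  by (rule cubic_inc_eq[OF mg cu vV d]) (use E en in \<open>simp add: inc_def\<close>)

lemma tri_case:
  assumes mg: "multigraph V E ends" and cu: "cubic V E ends"
    and E: "evt \<in> E" "evr \<in> E" "evs \<in> E" "ers \<in> E"
    and en: "ends evt = {v,t}" "ends evr = {v,r}" "ends evs = {v,s}" "ends ers = {r,s}"
    and d: "distinct [v,t,r,s]"
  shows "Good V E ends \<or> (\<exists>f. f \<in> E \<and> f \<noteq> ers \<and> ends f = {r,s})"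
proof (rule ccontr)
  assume nc: "\<not> ?thesis"
  hence ng: "\<not> Good V E ends" and nf: "\<And>f. f \<in> E \<Longrightarrow> ends f = {r,s} \<Longrightarrow> f = ers" by auto
  have vV: "v \<in> V" and rV: "r \<in> V" and sV: "s \<in> V" using mg_inV[OF mg] E en by auto
  have dv: "distinct [evt,evr,evs]" using en d by (auto simp: doubleton_eq_iff)
  have Iv: "inc E ends v = {evt,evr,evs}" by (rule inc3[OF mg cu vV E(1-3) en(1-3) dv])
  have rr: "r \<in> ends evr" "r \<in> ends ers" "evr \<noteq> ers" using en d by (auto simp: doubleton_eq_iff)
  obtain fr where fr: "fr \<in> E" "r \<in> ends fr" "distinct [evr,ers,fr]" "inc E ends r = {evr,ers,fr}"
    using third_edge[OF mg cu rV E(2) E(4) rr] by blast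
  obtain r' where r': "ends fr = {r,r'}" "r' \<noteq> r" using other_end[OF mg fr(1,2)] by blast
  have ss: "s \<in> ends evs" "s \<in> ends ers" "evs \<noteq> ers" using en d by (auto simp: doubleton_eq_iff)
  obtain fs where fs: "fs \<in> E" "s \<in> ends fs" "distinct [evs,ers,fs]" "inc E ends s = {evs,ers,fs}"
    using third_edge[OF mg cu sV E(3) E(4) ss] by blast
  obtain s' where s': "ends fs = {s,s'}" "s' \<noteq> s" using other_end[OF mg fs(1,2)] by blast
  have r's: "r' \<noteq> s"
  proof
    assume "r' = s" hence "ends fr = {r,s}" using r' by simp
    thus False using nf[OF fr(1)] fr(3) by auto
  qed
  have s'r: "s' \<noteq> r"
  proof
    assume "s' = r" hence "ends fs = {r,s}" using s' by (simp add: insert_commute)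
    thus False using nf[OF fs(1)] fs(3) by auto
  qed
  have r'v: "r' \<noteq> v"
  proof
    assume "r' = v"
    hence "v \<in> ends fr" using r' by simp
    hence "fr \<in> {evt,evr,evs}" using in_inc[OF fr(1) _ Iv] by simp
    thus False using fr(3) r' \<open>r' = v\<close> en d by (auto simp: doubleton_eq_iff)
  qed
  have s'v: "s' \<noteq> v"
  proof
    assume "s' = v"
    hence "v \<in> ends fs" using s' by simp
    hence "fs \<in> {evt,evr,evs}" using in_inc[OF fs(1) _ Iv] by simp
    thus False using fs(3) s' \<open>s' = v\<close> en d by (auto simp: doubleton_eq_iff)
  qed
  have "ends evs = {s,v}" using en by (simp add: insert_commute)
  have "Good V E ends"
    by (rule good_tri[OF mg cu _ _ _ E(2) E(4) E(3) E(1) fr(1) fs(1) en(2) en(4) \<open>ends evs = {s,v}\<close>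
          en(1) r'(1) s'(1)]) (use d r' s' r's s'r r'v s'v in auto)
  thus False using ng by simp
qed

lemma two_more:
  assumes mg: "multigraph V E ends" and cu: "cubic V E ends" and vV: "v \<in> V"
    and e: "e1 \<in> E" "v \<in> ends e1"
  obtains e2 e3 where "distinct [e1,e2,e3]" "inc E ends v = {e1,e2,e3}" "e2 \<in> E" "e3 \<in> E"
     "v \<in> ends e2" "v \<in> ends e3"
proof -
  obtain f1 f2 f3 where d: "distinct [f1,f2,f3]" and I: "inc E ends v = {f1,f2,f3}"
    using cubic_inc[OF mg cu vV] by blast
  have m: "e1 \<in> {f1,f2,f3}" using I e unfolding inc_def by auto
  have "\<exists>e2 e3. distinct [e1,e2,e3] \<and> {f1,f2,f3} = {e1,e2,e3}"
  proof -
    have "e1 = f1 \<or> e1 = f2 \<or> e1 = f3" using m by simp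
    thus ?thesis
    proof (elim disjE)
      assume "e1 = f1" thus ?thesis using d by (intro exI[of _ f2] exI[of _ f3]) auto
    next
      assume "e1 = f2" thus ?thesis using d by (intro exI[of _ f1] exI[of _ f3]) auto
    next
      assume "e1 = f3" thus ?thesis using d by (intro exI[of _ f1] exI[of _ f2]) auto
    qed
  qed
  then obtain e2 e3 where e23: "distinct [e1,e2,e3]" "{f1,f2,f3} = {e1,e2,e3}" by blast
  have "e2 \<in> E" "e3 \<in> E" "v \<in> ends e2" "v \<in> ends e3" using e23 I unfolding inc_def by auto
  thus ?thesis using that e23 I by simp
qed

lemma claw_case:
  assumes mg: "multigraph V E ends" and cu: "cubic V E ends"
    and E: "exa \<in> E" "exb \<in> E" "exc \<in> E"
    and en: "ends exa = {x,a}" "ends exb = {x,b}" "ends exc = {x,c}"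
    and d: "distinct [x,a,b,c]"
    and nx: "\<not> adjacent E ends a b" "\<not> adjacent E ends a c" "\<not> adjacent E ends b c"
  shows "Good V E ends"
proof -
  have xV: "x \<in> V" and aV: "a \<in> V" using mg_inV[OF mg] E en by auto
  have dx: "distinct [exa,exb,exc]" using en d by (auto simp: doubleton_eq_iff)
  have Ix: "inc E ends x = {exa,exb,exc}" by (rule inc3[OF mg cu xV E en dx])
  have nbx: "\<And>f s. f \<in> E \<Longrightarrow> ends f = {x,s} \<Longrightarrow> (f = exa \<and> s = a) \<or> (f = exb \<and> s = b) \<or> (f = exc \<and> s = c)"
    by (rule nb3[OF Ix en]) (use d in auto)
  have ea: "ends exa = {a,x}" using en by (simp add: insert_commute)
  obtain f1 f2 where f: "distinct [exa,f1,f2]" "inc E ends a = {exa,f1,f2}" "f1 \<in> E" "f2 \<in> E"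
     "a \<in> ends f1" "a \<in> ends f2"
    using two_more[OF mg cu aV E(1)] en by auto
  obtain a1 where a1: "ends f1 = {a,a1}" "a1 \<noteq> a" "a1 \<in> V" using other_end[OF mg f(3,5)] by blast
  obtain a2 where a2: "ends f2 = {a,a2}" "a2 \<noteq> a" "a2 \<in> V" using other_end[OF mg f(4,6)] by blast
  have a1x: "a1 \<noteq> x"
  proof
    assume "a1 = x" hence "ends f1 = {x,a}" using a1 by (simp add: insert_commute)
    thus False using nbx[OF f(3)] f(1) d by auto
  qed
  have a2x: "a2 \<noteq> x"
  proof
    assume "a2 = x" hence "ends f2 = {x,a}" using a2 by (simp add: insert_commute)
    thus False using nbx[OF f(4)] f(1) d by auto
  qed
  have a1bc: "a1 \<noteq> b" "a1 \<noteq> c" using nx adjI[of f1 E ends a a1] f(3) a1 by auto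
  have a2bc: "a2 \<noteq> b" "a2 \<noteq> c" using nx adjI[of f2 E ends a a2] f(4) a2 by auto
  show ?thesis
  proof (cases "a1 = a2")
    case True
    define y where "y = a1"
    have f12: "ends f1 = {a,y}" "ends f2 = {a,y}" using a1 a2 True unfolding y_def by auto
    have yV: "y \<in> V" using a1 unfolding y_def by simp
    have yy: "y \<in> ends f1" "y \<in> ends f2" "f1 \<noteq> f2" using f12 f(1) by auto
    obtain ey where ey: "ey \<in> E" "y \<in> ends ey" "distinct [f1,f2,ey]" "inc E ends y = {f1,f2,ey}"
      using third_edge[OF mg cu yV f(3,4) yy] by blast
    obtain y' where y': "ends ey = {y,y'}" "y' \<noteq> y" using other_end[OF mg ey(1,2)] by blast
    have y'a: "y' \<noteq> a"
    proof
      assume "y' = a" hence "a \<in> ends ey" using y' by simp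
      hence "ey \<in> {exa,f1,f2}" using in_inc[OF ey(1) _ f(2)] by simp
      thus False using ey(3) y' \<open>y' = a\<close> en a1x True d unfolding y_def by (auto simp: doubleton_eq_iff)
    qed
    have y'x: "y' \<noteq> x"
    proof
      assume "y' = x" hence "ends ey = {x,y}" using y' by (simp add: insert_commute)
      thus False using nbx[OF ey(1)] a1 a1bc unfolding y_def by auto
    qed
    show ?thesis
      by (rule good_digon[OF mg cu _ yy(3) f(3,4) E(1) ey(1) f12 ea y'(1)])
         (use a1 a1x y'a y'x y' d in \<open>auto simp: y_def\<close>)
  next
    case False
    show ?thesis
    proof (cases "witness E ends a")
      case False
      have nw: "x \<noteq> a1" "\<not> adjacent E ends x a1" "x \<noteq> a2" "\<not> adjacent E ends x a2"
        "a1 \<noteq> a2" "\<not> adjacent E ends a1 a2"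
        using nowitness3[OF f(2,1) ea a1(1) a2(1) False] by auto
      show ?thesis
        by (rule good_cc[OF mg cu E f(3,4) en a1(1) a2(1) d _ nx nw(2) nw(4) nw(6)])
           (use d a1 a2 a1x a2x nw in auto)
    next
      case True
      have W: "(x = a1 \<or> adjacent E ends x a1) \<or> (x = a2 \<or> adjacent E ends x a2) \<or> (a1 = a2 \<or> adjacent E ends a1 a2)"
        by (rule witness3[OF mg f(2,1) ea a1(1) a2(1) True])
      have n1: "\<not> adjacent E ends x a1"
      proof
        assume "adjacent E ends x a1"
        then obtain g where "g \<in> E" "ends g = {x,a1}" by (rule adjE)
        thus False using nbx a1 a1bc by blast
      qed
      have n2: "\<not> adjacent E ends x a2"
      proof
        assume "adjacent E ends x a2"
        then obtain g where "g \<in> E" "ends g = {x,a2}" by (rule adjE)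
        thus False using nbx a2 a2bc by blast
      qed
      have "adjacent E ends a1 a2" using W n1 n2 a1x a2x \<open>a1 \<noteq> a2\<close> by auto
      then obtain h where h: "h \<in> E" "ends h = {a1,a2}" by (rule adjE)
      have da: "distinct [a,x,a1,a2]" using a1 a2 a1x a2x \<open>a1 \<noteq> a2\<close> d by auto
      have "Good V E ends \<or> (\<exists>g. g \<in> E \<and> g \<noteq> h \<and> ends g = {a1,a2})"
        by (rule tri_case[OF mg cu E(1) f(3,4) h(1) ea a1(1) a2(1) h(2) da])
      moreover
      { fix g assume g: "g \<in> E" "g \<noteq> h" "ends g = {a1,a2}"
        have "Good V E ends"
          by (rule good_cl[OF mg cu E(1-3) f(3,4) h(1) g(1) en a1(1) a2(1) h(2) g(3) g(2)[symmetric] _ nx])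
             (use d a1 a2 a1x a2x a1bc a2bc \<open>a1 \<noteq> a2\<close> in auto) }
      ultimately show ?thesis by blast
    qed
  qed
qed

lemma leaf_case:
  assumes mg: "multigraph V E ends" and cu: "cubic V E ends"
    and E: "ewu \<in> E" "ewv \<in> E" "p \<in> E" "q \<in> E"
    and en: "ends ewu = {w,u}" "ends ewv = {w,v}" "ends p = {u,v}" "ends q = {u,v}"
    and pq: "p \<noteq> q" and d: "distinct [w,u,v]"
  shows "Good V E ends"
proof -
  have wV: "w \<in> V" and uV: "u \<in> V" and vV: "v \<in> V" using mg_inV[OF mg] E en by auto
  have en': "ends ewu = {u,w}" "ends ewv = {v,w}" "ends p = {v,u}" "ends q = {v,u}"
    using en by (simp_all add: insert_commute)
  have du: "distinct [ewu,p,q]" using en d pq by (auto simp: doubleton_eq_iff)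
  have dv: "distinct [ewv,p,q]" using en d pq by (auto simp: doubleton_eq_iff)
  have Iu: "inc E ends u = {ewu,p,q}" by (rule inc3[OF mg cu uV E(1,3,4) en'(1) en(3) en(4) du])
  have Iv: "inc E ends v = {ewv,p,q}" by (rule inc3[OF mg cu vV E(2,3,4) en'(2) en'(3) en'(4) dv])
  have ww: "w \<in> ends ewu" "w \<in> ends ewv" "ewu \<noteq> ewv" using en d by (auto simp: doubleton_eq_iff)
  obtain ewz where ewz: "ewz \<in> E" "w \<in> ends ewz" "distinct [ewu,ewv,ewz]" "inc E ends w = {ewu,ewv,ewz}"
    using third_edge[OF mg cu wV E(1,2) ww] by blast
  obtain z where z: "ends ewz = {w,z}" "z \<noteq> w" "z \<in> V" using other_end[OF mg ewz(1,2)] by blast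
  have nbu: "\<And>f s. f \<in> E \<Longrightarrow> ends f = {u,s} \<Longrightarrow> (f = ewu \<and> s = w) \<or> (f = p \<and> s = v) \<or> (f = q \<and> s = v)"
    by (rule nb3[OF Iu en'(1) en(3) en(4)]) (use d in auto)
  have nbv: "\<And>f s. f \<in> E \<Longrightarrow> ends f = {v,s} \<Longrightarrow> (f = ewv \<and> s = w) \<or> (f = p \<and> s = u) \<or> (f = q \<and> s = u)"
    by (rule nb3[OF Iv en'(2) en'(3) en'(4)]) (use d in auto)
  have nbw: "\<And>f s. f \<in> E \<Longrightarrow> ends f = {w,s} \<Longrightarrow> (f = ewu \<and> s = u) \<or> (f = ewv \<and> s = v) \<or> (f = ewz \<and> s = z)"
    by (rule nb3[OF ewz(4) en(1) en(2) z(1)]) (use d z in auto)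
  have zu: "z \<noteq> u"
  proof
    assume "z = u" hence "ends ewz = {u,w}" using z by (simp add: insert_commute)
    thus False using nbu[OF ewz(1)] ewz(3) d by auto
  qed
  have zv: "z \<noteq> v"
  proof
    assume "z = v" hence "ends ewz = {v,w}" using z by (simp add: insert_commute)
    thus False using nbv[OF ewz(1)] ewz(3) d by auto
  qed
  have ez: "ends ewz = {z,w}" using z by (simp add: insert_commute)
  obtain g1 g2 where g: "distinct [ewz,g1,g2]" "inc E ends z = {ewz,g1,g2}" "g1 \<in> E" "g2 \<in> E"
     "z \<in> ends g1" "z \<in> ends g2"
    using two_more[OF mg cu z(3) ewz(1)] ez by auto
  obtain z1 where z1: "ends g1 = {z,z1}" "z1 \<noteq> z" "z1 \<in> V" using other_end[OF mg g(3,5)] by blast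
  obtain z2 where z2: "ends g2 = {z,z2}" "z2 \<noteq> z" "z2 \<in> V" using other_end[OF mg g(4,6)] by blast
  have nbz: "\<And>f s. f \<in> E \<Longrightarrow> ends f = {z,s} \<Longrightarrow> (f = ewz \<and> s = w) \<or> (f = g1 \<and> s = z1) \<or> (f = g2 \<and> s = z2)"
    by (rule nb3[OF g(2) ez z1(1) z2(1)]) (use z z1 z2 in auto)
  have notw: "t \<noteq> w" "t \<noteq> u" "t \<noteq> v" if "f \<in> E" "ends f = {z,t}" "f \<noteq> ewz" for f t
  proof -
    show "t \<noteq> w"
    proof
      assume "t = w" hence "ends f = {w,z}" using that by (simp add: insert_commute)
      thus False using nbw[OF that(1)] that(3) zu zv by auto
    qed
    show "t \<noteq> u"
    proof
      assume "t = u" hence "ends f = {u,z}" using that by (simp add: insert_commute)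
      thus False using nbu[OF that(1)] z(2) zv by auto
    qed
    show "t \<noteq> v"
    proof
      assume "t = v" hence "ends f = {v,z}" using that by (simp add: insert_commute)
      thus False using nbv[OF that(1)] z(2) zu by auto
    qed
  qed
  have z1n: "z1 \<noteq> w" "z1 \<noteq> u" "z1 \<noteq> v" using notw[OF g(3) z1(1)] g(1) by auto
  have z2n: "z2 \<noteq> w" "z2 \<noteq> u" "z2 \<noteq> v" using notw[OF g(4) z2(1)] g(1) by auto
  show ?thesis
  proof (cases "z1 = z2")
    case True
    define y where "y = z1"
    have g12: "ends g1 = {z,y}" "ends g2 = {z,y}" using z1 z2 True unfolding y_def by auto
    have yV: "y \<in> V" using z1 unfolding y_def by simp
    have yy: "y \<in> ends g1" "y \<in> ends g2" "g1 \<noteq> g2" using g12 g(1) by auto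
    obtain ey where ey: "ey \<in> E" "y \<in> ends ey" "distinct [g1,g2,ey]" "inc E ends y = {g1,g2,ey}"
      using third_edge[OF mg cu yV g(3,4) yy] by blast
    obtain y' where y': "ends ey = {y,y'}" "y' \<noteq> y" using other_end[OF mg ey(1,2)] by blast
    have y'z: "y' \<noteq> z"
    proof
      assume "y' = z" hence "ends ey = {z,y}" using y' by (simp add: insert_commute)
      thus False using nbz[OF ey(1)] ey(3) z1n unfolding y_def by auto
    qed
    have y'w: "y' \<noteq> w"
    proof
      assume "y' = w" hence "ends ey = {w,y}" using y' by (simp add: insert_commute)
      thus False using nbw[OF ey(1)] z1n z1 unfolding y_def by auto
    qed
    show ?thesis
      by (rule good_digon[OF mg cu _ yy(3) g(3,4) ewz(1) ey(1) g12 ez y'(1)])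
         (use z1 z1n y'z y'w y' z in \<open>auto simp: y_def\<close>)
  next
    case False
    show ?thesis
    proof (cases "witness E ends z")
      case False
      have nw: "w \<noteq> z1" "\<not> adjacent E ends w z1" "w \<noteq> z2" "\<not> adjacent E ends w z2"
        "z1 \<noteq> z2" "\<not> adjacent E ends z1 z2"
        using nowitness3[OF g(2,1) ez z1(1) z2(1) False] by auto
      show ?thesis
        by (rule good_cl[OF mg cu ewz(1) g(3,4) E ez z1(1) z2(1) en pq _ nw(2) nw(4) nw(6)])
           (use d z1 z2 z1n z2n zu zv nw z in auto)
    next
      case True
      have W: "(w = z1 \<or> adjacent E ends w z1) \<or> (w = z2 \<or> adjacent E ends w z2) \<or> (z1 = z2 \<or> adjacent E ends z1 z2)"
        by (rule witness3[OF mg g(2,1) ez z1(1) z2(1) True])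
      have n1: "\<not> adjacent E ends w z1"
      proof
        assume "adjacent E ends w z1"
        then obtain h where "h \<in> E" "ends h = {w,z1}" by (rule adjE)
        thus False using nbw z1n z1 by blast
      qed
      have n2: "\<not> adjacent E ends w z2"
      proof
        assume "adjacent E ends w z2"
        then obtain h where "h \<in> E" "ends h = {w,z2}" by (rule adjE)
        thus False using nbw z2n z2 by blast
      qed
      have "adjacent E ends z1 z2" using W n1 n2 z1n z2n \<open>z1 \<noteq> z2\<close> by auto
      then obtain h where h: "h \<in> E" "ends h = {z1,z2}" by (rule adjE)
      have dz: "distinct [z,w,z1,z2]" using z z1 z2 z1n z2n \<open>z1 \<noteq> z2\<close> by auto
      have "Good V E ends \<or> (\<exists>f. f \<in> E \<and> f \<noteq> h \<and> ends f = {z1,z2})"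
        by (rule tri_case[OF mg cu ewz(1) g(3,4) h(1) ez z1(1) z2(1) h(2) dz])
      moreover
      { fix f assume f: "f \<in> E" "f \<noteq> h" "ends f = {z1,z2}"
        define S where "S = {w,u,v,z,z1,z2}"
        define N where "N = {p,ewv,ewz,g1,h}"
        define colN where "colN = (\<lambda>e. if e = p \<or> e = ewz \<or> e = h then (0::nat) else 1)"
        have dS: "distinct [w,u,v,z,z1,z2]" using d z zu zv z1n z2n z1 z2 \<open>z1 \<noteq> z2\<close> by auto
        have h': "ends h = {z2,z1}" "ends f = {z2,z1}" using h f by (simp_all add: insert_commute)
        have g1': "ends g1 = {z1,z}" and g2': "ends g2 = {z2,z}" using z1 z2 by (simp_all add: insert_commute)
        have d1: "distinct [g1,h,f]" using g1' h f dS by (auto simp: doubleton_eq_iff)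
        have d2: "distinct [g2,h,f]" using g2' h f dS by (auto simp: doubleton_eq_iff)
        have I1: "inc E ends z1 = {g1,h,f}" by (rule inc3[OF mg cu z1(3) g(3) h(1) f(1) g1' h(2) f(3) d1])
        have I2: "inc E ends z2 = {g2,h,f}" by (rule inc3[OF mg cu z2(3) g(4) h(1) f(1) g2' h'(1) h'(2) d2])
        have incS: "\<And>e x. e \<in> E \<Longrightarrow> x \<in> S \<Longrightarrow> x \<in> ends e \<Longrightarrow> e \<in> {ewu,ewv,ewz,p,q,g1,g2,h,f}"
        proof -
          fix e x assume "e \<in> E" "x \<in> S" "x \<in> ends e"
          hence "e \<in> inc E ends x" unfolding inc_def by simp
          moreover have "x = w \<or> x = u \<or> x = v \<or> x = z \<or> x = z1 \<or> x = z2" using \<open>x \<in> S\<close> unfolding S_def by simp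
          ultimately show "e \<in> {ewu,ewv,ewz,p,q,g1,g2,h,f}" using ewz(4) Iu Iv g(2) I1 I2 by auto
        qed
        have allS: "\<And>e. e \<in> {ewu,ewv,ewz,p,q,g1,g2,h,f} \<Longrightarrow> ends e \<subseteq> S"
          unfolding S_def using en z(1) z1(1) z2(1) h(2) f(3) by auto
        have SV: "S \<subseteq> V" unfolding S_def using wV uV vV z z1 z2 by auto
        have closed: "\<And>e. e \<in> E \<Longrightarrow> ends e \<inter> S \<noteq> {} \<Longrightarrow> ends e \<subseteq> S"
          using incS allS by blast
        have NE: "N \<subseteq> E" unfolding N_def using E ewz(1) g(3) h(1) by auto
        have NS: "\<And>e. e \<in> N \<Longrightarrow> ends e \<subseteq> S" using allS unfolding N_def by auto
        have dN: "distinct [p,ewv,ewz,g1,h]" using en z1 h dS ez by (auto simp: doubleton_eq_iff)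
        have pN: "proper ends N colN"
        proof (rule proper_intro_local)
          fix e assume "e \<in> N" thus "colN e < 2" unfolding colN_def by auto
        next
          fix x e1 e2 assume e: "e1 \<in> N" "e2 \<in> N" "e1 \<noteq> e2" "x \<in> ends e1" "x \<in> ends e2"
          have m0: "\<And>a b. a \<in> {p,ewz,h} \<Longrightarrow> b \<in> {p,ewz,h} \<Longrightarrow> a \<noteq> b \<Longrightarrow> ends a \<inter> ends b = {}"
          proof -
            have "ends p \<inter> ends ewz = {}" "ends p \<inter> ends h = {}" "ends ewz \<inter> ends h = {}"
              using en(3) ez h(2) dS by auto
            thus "\<And>a b. a \<in> {p,ewz,h} \<Longrightarrow> b \<in> {p,ewz,h} \<Longrightarrow> a \<noteq> b \<Longrightarrow> ends a \<inter> ends b = {}"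
              by auto
          qed
          have m1: "ends ewv \<inter> ends g1 = {}" using en(2) z1(1) dS by auto
          have c0: "\<And>a. a \<in> {p,ewz,h} \<Longrightarrow> colN a = 0" unfolding colN_def by auto
          have c1: "\<And>a. a \<in> {ewv,g1} \<Longrightarrow> colN a = 1" unfolding colN_def using dN by auto
          have NN: "N = {p,ewz,h} \<union> {ewv,g1}" unfolding N_def by auto
          show "colN e1 \<noteq> colN e2"
          proof (cases "e1 \<in> {p,ewz,h}")
            case True
            hence "e2 \<notin> {p,ewz,h}" using m0 e by blast
            hence "e2 \<in> {ewv,g1}" using e NN by auto
            thus ?thesis using c0[OF True] c1 by simp
          next
            case False
            hence e1': "e1 \<in> {ewv,g1}" using e NN by auto
            have "e2 \<notin> {ewv,g1}" using m1 e e1' by (auto simp: Int_commute)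
            hence "e2 \<in> {p,ewz,h}" using e NN by auto
            thus ?thesis using c0 c1[OF e1'] by simp
          qed
        qed
        have "card S = 6" unfolding S_def using dS by simp
        moreover have "card N = 5" unfolding N_def using dN by simp
        ultimately have "Good V E ends"
          using good_comp[OF mg cu SV closed NE NS pN] unfolding S_def by simp }
      ultimately show ?thesis by blast
    qed
  qed
qed

lemma double_case:
  assumes mg: "multigraph V E ends" and cu: "cubic V E ends"
    and E: "e1 \<in> E" "e2 \<in> E" "e3 \<in> E"
    and en: "ends e1 = {v,y}" "ends e2 = {v,y}" "ends e3 = {v,t}"
    and d: "distinct [e1,e2,e3]" and ty: "t \<noteq> y"
  shows "Good V E ends"
proof -
  have vV: "v \<in> V" and yV: "y \<in> V" and tV: "t \<in> V" using mg_inV[OF mg] E en by auto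
  have yv: "y \<noteq> v" using mg_ne[OF mg E(1) en(1)] .
  have tv: "t \<noteq> v" using mg_ne[OF mg E(3) en(3)] .
  have Iv: "inc E ends v = {e1,e2,e3}" by (rule inc3[OF mg cu vV E en d])
  have yy: "y \<in> ends e1" "y \<in> ends e2" "e1 \<noteq> e2" using en d by auto
  obtain ey where ey: "ey \<in> E" "y \<in> ends ey" "distinct [e1,e2,ey]" "inc E ends y = {e1,e2,ey}"
    using third_edge[OF mg cu yV E(1,2) yy] by blast
  obtain y' where y': "ends ey = {y,y'}" "y' \<noteq> y" using other_end[OF mg ey(1,2)] by blast
  have nbv: "\<And>f s. f \<in> E \<Longrightarrow> ends f = {v,s} \<Longrightarrow> (f = e1 \<and> s = y) \<or> (f = e2 \<and> s = y) \<or> (f = e3 \<and> s = t)"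
    by (rule nb3[OF Iv en]) (use yv tv in auto)
  have y'v: "y' \<noteq> v"
  proof
    assume "y' = v" hence "ends ey = {v,y}" using y' by (simp add: insert_commute)
    thus False using nbv[OF ey(1)] ey(3) ty by auto
  qed
  show ?thesis
  proof (cases "y' = t")
    case False
    show ?thesis
      by (rule good_digon[OF mg cu _ yy(3) E(1,2,3) ey(1) en y'(1)]) (use yv tv ty y' y'v False in auto)
  next
    case True
    have "ends e3 = {t,v}" "ends ey = {t,y}" using en y' True by (simp_all add: insert_commute)
    show ?thesis
      by (rule leaf_case[OF mg cu E(3) ey(1) E(1,2) \<open>ends e3 = {t,v}\<close> \<open>ends ey = {t,y}\<close> en(1,2) yy(3)])
         (use yv tv ty in auto)
  qed
qed

lemma adj_case:
  assumes mg: "multigraph V E ends" and cu: "cubic V E ends"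
    and E: "evt \<in> E" "evr \<in> E" "evs \<in> E"
    and en: "ends evt = {v,t}" "ends evr = {v,r}" "ends evs = {v,s}"
    and d: "distinct [v,t,r,s]" and a: "adjacent E ends r s"
  shows "Good V E ends"
proof -
  obtain h where h: "h \<in> E" "ends h = {r,s}" using a by (rule adjE)
  have "Good V E ends \<or> (\<exists>f. f \<in> E \<and> f \<noteq> h \<and> ends f = {r,s})"
    by (rule tri_case[OF mg cu E h(1) en h(2) d])
  moreover
  { fix f assume f: "f \<in> E" "f \<noteq> h" "ends f = {r,s}"
    have "Good V E ends"
      by (rule leaf_case[OF mg cu E(2,3) h(1) f(1) en(2,3) h(2) f(3) f(2)[symmetric]]) (use d in auto) }
  ultimately show ?thesis by blast
qed

lemma exists_good:
  assumes mg: "multigraph V E ends" and cu: "cubic V E ends" and ne: "V \<noteq> {}"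
  shows "Good V E ends"
proof -
  obtain v where vV: "v \<in> V" using ne by blast
  obtain e1 e2 e3 where d: "distinct [e1,e2,e3]" and I: "inc E ends v = {e1,e2,e3}"
    using cubic_inc[OF mg cu vV] by blast
  have E: "e1 \<in> E" "e2 \<in> E" "e3 \<in> E" "v \<in> ends e1" "v \<in> ends e2" "v \<in> ends e3"
    using I unfolding inc_def by auto
  obtain t1 where t1: "ends e1 = {v,t1}" "t1 \<noteq> v" "t1 \<in> V" using other_end[OF mg E(1,4)] by blast
  obtain t2 where t2: "ends e2 = {v,t2}" "t2 \<noteq> v" "t2 \<in> V" using other_end[OF mg E(2,5)] by blast
  obtain t3 where t3: "ends e3 = {v,t3}" "t3 \<noteq> v" "t3 \<in> V" using other_end[OF mg E(3,6)] by blast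
  show ?thesis
  proof (cases "t1 = t2 \<and> t2 = t3")
    case True
    define S where "S = {v,t1}"
    define N where "N = {e1,e2}"
    define colN where "colN = (\<lambda>e. if e = e1 then (0::nat) else 1)"
    have en': "ends e1 = {t1,v}" "ends e2 = {t1,v}" "ends e3 = {t1,v}" using t1 t2 t3 True
      by (simp_all add: insert_commute)
    have I1: "inc E ends t1 = {e1,e2,e3}" by (rule inc3[OF mg cu t1(3) E(1-3) en' d])
    have SV: "S \<subseteq> V" unfolding S_def using vV t1 by auto
    have closed: "\<And>e. e \<in> E \<Longrightarrow> ends e \<inter> S \<noteq> {} \<Longrightarrow> ends e \<subseteq> S"
    proof -
      fix e assume e: "e \<in> E" "ends e \<inter> S \<noteq> {}"
      hence "v \<in> ends e \<or> t1 \<in> ends e" unfolding S_def by auto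
      hence "e \<in> {e1,e2,e3}" using in_inc[OF e(1) _ I] in_inc[OF e(1) _ I1] by blast
      thus "ends e \<subseteq> S" using t1 t2 t3 True unfolding S_def by auto
    qed
    have NE: "N \<subseteq> E" unfolding N_def using E by auto
    have NS: "\<And>e. e \<in> N \<Longrightarrow> ends e \<subseteq> S" unfolding N_def S_def using t1 t2 True by auto
    have pN: "proper ends N colN" unfolding proper_def N_def colN_def using d by auto
    have "card S = 2" unfolding S_def using t1 by auto
    moreover have "card N = 2" unfolding N_def using d by auto
    ultimately show ?thesis using good_comp[OF mg cu SV closed NE NS pN] unfolding S_def by simp
  next
    case nt: False
    show ?thesis
    proof (cases "t1 = t2 \<or> t1 = t3 \<or> t2 = t3")
      case True
      have d': "distinct [e1,e3,e2]" "distinct [e2,e3,e1]" using d by auto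
      have "t1 = t2 \<and> t3 \<noteq> t2 \<or> t1 = t3 \<and> t2 \<noteq> t3 \<or> t2 = t3 \<and> t1 \<noteq> t3" using True nt by auto
      thus ?thesis
      proof (elim disjE conjE)
        assume "t1 = t2" "t3 \<noteq> t2"
        thus ?thesis using double_case[OF mg cu E(1-3) _ _ t3(1) d, of t2] t1 t2 by simp
      next
        assume "t1 = t3" "t2 \<noteq> t3"
        thus ?thesis using double_case[OF mg cu E(1) E(3) E(2) _ _ t2(1) d'(1), of t3] t1 t3 by simp
      next
        assume "t2 = t3" "t1 \<noteq> t3"
        thus ?thesis using double_case[OF mg cu E(2) E(3) E(1) _ _ t1(1) d'(2), of t3] t2 t3 by simp
      qed
    next
      case False
      hence dt: "distinct [v,t1,t2,t3]" using t1 t2 t3 by auto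
      show ?thesis
      proof (cases "witness E ends v")
        case False
        have nw: "\<not> adjacent E ends t1 t2" "\<not> adjacent E ends t1 t3" "\<not> adjacent E ends t2 t3"
          using nowitness3[OF I d t1(1) t2(1) t3(1) False] by auto
        show ?thesis by (rule claw_case[OF mg cu E(1-3) t1(1) t2(1) t3(1) dt nw])
      next
        case True
        have W: "(t1 = t2 \<or> adjacent E ends t1 t2) \<or> (t1 = t3 \<or> adjacent E ends t1 t3) \<or> (t2 = t3 \<or> adjacent E ends t2 t3)"
          by (rule witness3[OF mg I d t1(1) t2(1) t3(1) True])
        hence "adjacent E ends t1 t2 \<or> adjacent E ends t1 t3 \<or> adjacent E ends t2 t3" using dt by auto
        thus ?thesis
        proof (elim disjE)
          assume "adjacent E ends t1 t2"
          show ?thesis by (rule adj_case[OF mg cu E(3) E(1) E(2) t3(1) t1(1) t2(1) _ \<open>adjacent E ends t1 t2\<close>]) (use dt in auto)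
        next
          assume "adjacent E ends t1 t3"
          show ?thesis by (rule adj_case[OF mg cu E(2) E(1) E(3) t2(1) t1(1) t3(1) _ \<open>adjacent E ends t1 t3\<close>]) (use dt in auto)
        next
          assume "adjacent E ends t2 t3"
          show ?thesis by (rule adj_case[OF mg cu E(1) E(2) E(3) t1(1) t2(1) t3(1) _ \<open>adjacent E ends t2 t3\<close>]) (use dt in auto)
        qed
      qed
    qed
  qed
qed

lemma main_bound:
  fixes V :: "'v set" and E :: "'e set"
  assumes "multigraph V E ends" "cubic V E ends"
  shows "5 * card V \<le> 6 * nu 2 E ends + 2 * ncl V E ends"
  using assms
proof (induction "card V" arbitrary: V E ends rule: less_induct)
  case less
  show ?case
  proof (cases "V = {}")
    case True thus ?thesis by simp
  next
    case False
    have "Good V E ends" by (rule exists_good[OF less.prems False])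
    then obtain V' :: "'v set" and E' :: "'e set" and ends' where
      G: "multigraph V' E' ends'" "cubic V' E' ends'" "card V' < card V"
      "5 * card V' \<le> 6 * nu 2 E' ends' + 2 * ncl V' E' ends' \<longrightarrow>
        5 * card V \<le> 6 * nu 2 E ends + 2 * ncl V E ends"
      unfolding Good_def by blast
    have "5 * card V' \<le> 6 * nu 2 E' ends' + 2 * ncl V' E' ends'" using less.hyps[OF G(3) G(1) G(2)] .
    thus ?thesis using G(4) by simp
  qed
qed

theorem theorem8:
  fixes V :: "'v set" and E :: "'e set" and ends :: "'e \<Rightarrow> 'v set"
  assumes "multigraph V E ends" and "cubic V E ends" and "claw_free V E ends"
  shows "real (nu 2 E ends) \<ge> 5 / 6 * real (card V)"
proof -
  have "5 * card V \<le> 6 * nu 2 E ends + 2 * ncl V E ends" by (rule main_bound[OF assms(1,2)])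
  moreover have "ncl V E ends = 0" by (rule claw_free_ncl[OF assms(3)])
  ultimately have "5 * card V \<le> 6 * nu 2 E ends" by simp
  hence "real (5 * card V) \<le> real (6 * nu 2 E ends)" by (simp only: of_nat_le_iff)
  thus ?thesis by simp
qed


end
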